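(* There is a universal constant $C>0$ such that the following holds. Let $G$ be a weighted finite graph, let $f_1,\ldots,f_k:V\to\mathbb{R}$ be orthonormal in $l^2(V,\mu)$, and let $F:V\to\mathbb{R}^k$, $F(v)=(f_1(v),\ldots,f_k(v))$. Then there exists a $k$-sub-bipartition $\{(V_{2i-1},V_{2i})\}_{i=1}^k$ of $V$ such that for each $1\leq i\leq k$, \[ \frac{(1-\overline{\phi}(V_{2i-1},V_{2i}))^2}{2}\leq1-\sqrt{1-(1-\overline{\phi}(V_{2i-1},V_{2i}))^2}\leq Ck^6\,\overline{\mathcal{R}}(F). \]
   Context: $G=(V,E,w)$ is a finite undirected graph without self-loops, with positive symmetric edge weights $w_{uv}$ ($w_{uv}=0$ for non-edges), degrees $d_u=\sum_vw_{uv}$ (implicitly positive), $\mu(u)=d_u$, and $(f,g)_\mu=\sum_u\mu(u)f(u)g(u)$. $|E(A,B)|:=\sum_{u\in A,v\in B}w_{uv}$, $\mathrm{vol}(A)=\sum_{u\in A}d_u$. For disjoint $V_1,V_2$ with $V_1\cup V_2\neq\emptyset$, $\overline{\phi}(V_1,V_2)=2|E(V_1,V_2)|/\mathrm{vol}(V_1\cup V_2)$. A $k$-sub-bipartition is a collection of $k$ pairs $(V_1,V_2),\ldots,(V_{2k-1},V_{2k})$ of pairwise disjoint subsets of $V$ with $V_{2i-1}\cup V_{2i}\neq\emptyset$ for each $i$. For a map $F:V\to\mathbb{R}^k$ not identically zero, \[ \overline{\mathcal{R}}(F):=\frac{\sum_{\{u,v\}\in E}\|F(u)+F(v)\|^2w_{uv}}{\sum_{u\in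 V}\|F(u)\|^2\mu(u)}, \] the numerator summing over each edge once. *)

theory Defs
  imports Complex_Main
begin

text \<open>Weighted finite graph on vertex set V (vertices are naturals), weight function w.
  Only the values of w on V x V matter.\<close>

definition deg :: "nat set \<Rightarrow> (nat \<Rightarrow> nat \<Rightarrow> real) \<Rightarrow> nat \<Rightarrow> real" where
  "deg V w u = (\<Sum>v\<in>V. w u v)"

definition weighted_graph :: "nat set \<Rightarrow> (nat \<Rightarrow> nat \<Rightarrow> real) \<Rightarrow> bool" where
  "weighted_graph V w \<longleftrightarrow> finite V
     \<and> (\<forall>u\<in>V. \<forall>v\<in>V. w u v = w v u)
     \<and> (\<forall>u\<in>V. \<forall>v\<in>V. 0 \<le> w u v)
     \<and> (\<forall>u\<in>V. w u u = 0)
     \<and> (\<forall>u\<in>V. 0 < deg V w u)"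

text \<open>Inner product of l^2(V,mu) with mu(u) = d_u.\<close>
definition ip_mu :: "nat set \<Rightarrow> (nat \<Rightarrow> nat \<Rightarrow> real) \<Rightarrow> (nat \<Rightarrow> real) \<Rightarrow> (nat \<Rightarrow> real) \<Rightarrow> real" where
  "ip_mu V w f g = (\<Sum>u\<in>V. deg V w u * f u * g u)"

definition cut_weight :: "(nat \<Rightarrow> nat \<Rightarrow> real) \<Rightarrow> nat set \<Rightarrow> nat set \<Rightarrow> real" where
  "cut_weight w A B = (\<Sum>u\<in>A. \<Sum>v\<in>B. w u v)"

definition vol :: "nat set \<Rightarrow> (nat \<Rightarrow> nat \<Rightarrow> real) \<Rightarrow> nat set \<Rightarrow> real" where
  "vol V w A = (\<Sum>u\<in>A. deg V w u)"

definition phibar :: "nat set \<Rightarrow> (nat \<Rightarrow> nat \<Rightarrow> real) \<Rightarrow> nat set \<Rightarrow> nat set \<Rightarrow> real" where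
  "phibar V w A B = 2 * cut_weight w A B / vol V w (A \<union> B)"

text \<open>F(u) = (f 0 u, ..., f (k-1) u). The numerator sums over each edge once; since w u u = 0
  and w is symmetric this is half of the sum over all ordered pairs (u,v) in V x V.\<close>
definition rayleigh_bar :: "nat set \<Rightarrow> (nat \<Rightarrow> nat \<Rightarrow> real) \<Rightarrow> nat \<Rightarrow> (nat \<Rightarrow> nat \<Rightarrow> real) \<Rightarrow> real" where
  "rayleigh_bar V w k f =
     ((1/2) * (\<Sum>u\<in>V. \<Sum>v\<in>V. (\<Sum>i<k. (f i u + f i v)\<^sup>2) * w u v))
     / (\<Sum>u\<in>V. (\<Sum>i<k. (f i u)\<^sup>2) * deg V w u)"

text \<open>k-sub-bipartition, 0-indexed: pairs (S (2i), S (2i+1)) for i < k.\<close>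
definition sub_bipartition :: "nat set \<Rightarrow> nat \<Rightarrow> (nat \<Rightarrow> nat set) \<Rightarrow> bool" where
  "sub_bipartition V k S \<longleftrightarrow>
     (\<forall>i<2*k. S i \<subseteq> V)
     \<and> (\<forall>i<2*k. \<forall>j<2*k. i \<noteq> j \<longrightarrow> S i \<inter> S j = {})
     \<and> (\<forall>i<k. S (2*i) \<union> S (2*i+1) \<noteq> {})"

end

theory Submission
  imports Defs "HOL-Analysis.L2_Norm"
begin


definition prevt :: "real set \<Rightarrow> real \<Rightarrow> real" where
  "prevt T t = Max (insert 0 {t'\<in>T. t' < t})"

lemma prevt_props:
  assumes "finite T" "\<forall>t\<in>T. 0 < t" "t \<in> T"
  shows "prevt T t < t" "prevt T t \<in> insert 0 T" "\<And>t'. t' \<in> T \<Longrightarrow> t' < t \<Longrightarrow> t' \<le> prevt T t"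
proof -
  have fin: "finite (insert 0 {t'\<in>T. t' < t})" using assms by auto
  have "prevt T t \<in> insert 0 {t'\<in>T. t' < t}" unfolding prevt_def
    using Max_in[OF fin] by blast
  then show "prevt T t < t" "prevt T t \<in> insert 0 T" using assms by auto
  show "\<And>t'. t' \<in> T \<Longrightarrow> t' < t \<Longrightarrow> t' \<le> prevt T t" unfolding prevt_def
    using Max_ge[OF fin] by blast
qed

lemma layer_aux:
  assumes "finite T" "\<forall>t\<in>T. 0 < t"
  shows "\<forall>a. card {t\<in>T. t \<le> a} = n \<longrightarrow> a \<in> insert 0 T \<longrightarrow> (\<Sum>t\<in>{t\<in>T. t \<le> a}. t - prevt T t) = a"
proof (induction n rule: less_induct)
  case (less n)
  show ?case
  proof (intro allI impI)
    fix a assume c: "card {t\<in>T. t \<le> a} = n" and a: "a \<in> insert 0 T"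
    show "(\<Sum>t\<in>{t\<in>T. t \<le> a}. t - prevt T t) = a"
    proof (cases "a = 0")
      case True
      then have e: "{t\<in>T. t \<le> a} = {}" using assms by force
      show ?thesis unfolding e using True by simp
    next
      case False
      then have aT: "a \<in> T" using a by auto
      let ?p = "prevt T a"
      have p1: "?p < a" and p2: "?p \<in> insert 0 T" and p3: "\<And>t'. t' \<in> T \<Longrightarrow> t' < a \<Longrightarrow> t' \<le> ?p"
        using prevt_props[OF assms aT] by auto
      have eq: "{t\<in>T. t \<le> a} = insert a {t\<in>T. t \<le> ?p}"
        using p1 p3 aT by force
      have nin: "a \<notin> {t\<in>T. t \<le> ?p}" using p1 by auto
      have fin: "finite {t\<in>T. t \<le> ?p}" using assms by auto
      have cl: "card {t\<in>T. t \<le> ?p} < n" using c eq nin fin by simp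
      have "(\<Sum>t\<in>{t\<in>T. t \<le> ?p}. t - prevt T t) = ?p"
        using less[OF cl] p2 by blast
      then show ?thesis using eq nin fin by simp
    qed
  qed
qed

lemma layer:
  assumes "finite T" "\<forall>t\<in>T. 0 < t" "a \<in> insert 0 T"
  shows "(\<Sum>t\<in>{t\<in>T. t \<le> a}. t - prevt T t) = a"
  using layer_aux[OF assms(1,2)] assms(3) by blast




lemma layer_ind:
  assumes "finite T" "\<forall>t\<in>T. 0 < t" "a \<in> insert 0 T"
  shows "(\<Sum>t\<in>T. (t - prevt T t) * of_bool (t \<le> a)) = a"
proof -
  have "(\<Sum>t\<in>T. (t - prevt T t) * of_bool (t \<le> a)) = (\<Sum>t\<in>{t\<in>T. t \<le> a}. t - prevt T t)"
    using assms(1) by (simp add: sum.inter_filter[symmetric] of_bool_def if_distrib cong: if_cong)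
  also have "\<dots> = a" using layer[OF assms] .
  finally show ?thesis .
qed

lemma pair_ineq:
  fixes a b :: real
  shows "a\<^sup>2 + b\<^sup>2 - 2 * (if 0 < a \<and> b < 0 then min (a\<^sup>2) (b\<^sup>2) else 0)
            - 2 * (if 0 < b \<and> a < 0 then min (b\<^sup>2) (a\<^sup>2) else 0)
         \<le> \<bar>a + b\<bar> * (\<bar>a\<bar> + \<bar>b\<bar>)"
proof -
  consider "0 < a \<and> b < 0" | "0 < b \<and> a < 0" | "0 \<le> a \<and> 0 \<le> b" | "a \<le> 0 \<and> b \<le> 0" by linarith
  then show ?thesis
  proof cases
    case 1
    have "\<bar>a + b\<bar> * (\<bar>a\<bar> + \<bar>b\<bar>) = \<bar>(a+b)*(a-b)\<bar>" using 1 by (simp add: abs_mult)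
    also have "\<dots> = \<bar>a\<^sup>2 - b\<^sup>2\<bar>" by (simp add: power2_eq_square algebra_simps)
    finally show ?thesis using 1 by (auto simp: min_def)
  next
    case 2
    have "\<bar>a + b\<bar> * (\<bar>a\<bar> + \<bar>b\<bar>) = \<bar>(a+b)*(b-a)\<bar>" using 2 by (simp add: abs_mult)
    also have "\<dots> = \<bar>b\<^sup>2 - a\<^sup>2\<bar>" by (simp add: power2_eq_square algebra_simps)
    finally show ?thesis using 2 by (auto simp: min_def)
  next
    case 3
    then have "\<bar>a + b\<bar> * (\<bar>a\<bar> + \<bar>b\<bar>) = (a+b)*(a+b)" by simp
    then show ?thesis using 3 by (simp add: power2_eq_square algebra_simps mult_nonneg_nonneg)
  next
    case 4
    then have "\<bar>a + b\<bar> * (\<bar>a\<bar> + \<bar>b\<bar>) = (a+b)*(a+b)" by (simp add: algebra_simps)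
    then show ?thesis using 4 by (simp add: power2_eq_square algebra_simps mult_nonpos_nonpos)
  qed
qed




lemma sum_subset_ind:
  fixes h :: "'a \<Rightarrow> real"
  assumes "finite V" "S \<subseteq> V"
  shows "(\<Sum>u\<in>S. h u) = (\<Sum>u\<in>V. h u * of_bool (u \<in> S))"
proof -
  have "S = {u\<in>V. u \<in> S}" using assms by auto
  then have "(\<Sum>u\<in>S. h u) = (\<Sum>u\<in>{u\<in>V. u \<in> S}. h u)" by simp
  also have "\<dots> = (\<Sum>u\<in>V. if u \<in> S then h u else 0)" using sum.inter_filter[OF assms(1), of h "\<lambda>u. u \<in> S"] by simp
  also have "\<dots> = (\<Sum>u\<in>V. h u * of_bool (u \<in> S))" by (rule sum.cong) auto
  finally show ?thesis .
qed

lemma vol_as: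
  assumes "finite V" "S \<subseteq> V"
  shows "vol V w S = (\<Sum>u\<in>V. \<Sum>v\<in>V. w u v * of_bool (u \<in> S))"
  unfolding vol_def deg_def sum_subset_ind[OF assms] by (simp add: sum_distrib_right)

lemma cut_as:
  assumes "finite V" "A \<subseteq> V" "B \<subseteq> V"
  shows "cut_weight w A B = (\<Sum>u\<in>V. \<Sum>v\<in>V. w u v * of_bool (u \<in> A \<and> v \<in> B))"
proof -
  have "cut_weight w A B = (\<Sum>u\<in>V. (\<Sum>v\<in>B. w u v) * of_bool (u \<in> A))"
    unfolding cut_weight_def using sum_subset_ind[OF assms(1,2)] by blast
  also have "\<dots> = (\<Sum>u\<in>V. (\<Sum>v\<in>V. w u v * of_bool (v \<in> B)) * of_bool (u \<in> A))"
    using sum_subset_ind[OF assms(1,3)] by simp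
  also have "\<dots> = (\<Sum>u\<in>V. \<Sum>v\<in>V. w u v * of_bool (u \<in> A \<and> v \<in> B))"
    by (simp add: sum_distrib_left sum_distrib_right of_bool_conj mult_ac)
  finally show ?thesis .
qed

lemma swap_sym:
  fixes h :: "nat \<Rightarrow> nat \<Rightarrow> real"
  assumes "\<forall>u\<in>V. \<forall>v\<in>V. w u v = w v u"
  shows "(\<Sum>u\<in>V. \<Sum>v\<in>V. w u v * h u v) = (\<Sum>u\<in>V. \<Sum>v\<in>V. w u v * h v u)"
proof -
  have "(\<Sum>u\<in>V. \<Sum>v\<in>V. w u v * h u v) = (\<Sum>v\<in>V. \<Sum>u\<in>V. w u v * h u v)" by (rule sum.swap)
  also have "\<dots> = (\<Sum>v\<in>V. \<Sum>u\<in>V. w v u * h u v)"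
    using assms by (intro sum.cong refl) auto
  finally show ?thesis .
qed

lemma cut_sym:
  assumes "finite V" "A \<subseteq> V" "B \<subseteq> V" "\<forall>u\<in>V. \<forall>v\<in>V. w u v = w v u"
  shows "cut_weight w A B = cut_weight w B A"
  unfolding cut_as[OF assms(1,2,3)] cut_as[OF assms(1,3,2)]
  using swap_sym[OF assms(4), of "\<lambda>u v. of_bool (u \<in> A \<and> v \<in> B)"] by (simp add: conj_commute)

lemma rounding:
  fixes g :: "nat \<Rightarrow> real"
  assumes wg: "weighted_graph V w"
    and Dpos: "0 < (\<Sum>u\<in>V. deg V w u * (g u)\<^sup>2)"
  shows "\<exists>A B. A \<subseteq> {u\<in>V. 0 < g u} \<and> B \<subseteq> {u\<in>V. g u < 0} \<and> A \<union> B \<noteq> {} \<and>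
     vol V w (A \<union> B) - 2 * cut_weight w A B
       \<le> ((\<Sum>u\<in>V. \<Sum>v\<in>V. w u v * (\<bar>g u + g v\<bar> * (\<bar>g u\<bar> + \<bar>g v\<bar>))) / (2 * (\<Sum>u\<in>V. deg V w u * (g u)\<^sup>2)))
          * vol V w (A \<union> B)"
proof -
  define D where "D = (\<Sum>u\<in>V. deg V w u * (g u)\<^sup>2)"
  define Num where "Num = (\<Sum>u\<in>V. \<Sum>v\<in>V. w u v * (\<bar>g u + g v\<bar> * (\<bar>g u\<bar> + \<bar>g v\<bar>)))"
  define r where "r = Num / (2 * D)"
  have fV: "finite V" and sym: "\<forall>u\<in>V. \<forall>v\<in>V. w u v = w v u" and wnn: "\<forall>u\<in>V. \<forall>v\<in>V. 0 \<le> w u v"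
    using wg unfolding weighted_graph_def by auto
  define T where "T = (\<lambda>u. (g u)\<^sup>2) ` {u\<in>V. g u \<noteq> 0}"
  have fT: "finite T" unfolding T_def using fV by auto
  have Tpos: "\<forall>t\<in>T. 0 < t" unfolding T_def by auto
  have Tne: "T \<noteq> {}"
  proof
    assume "T = {}"
    then have "\<forall>u\<in>V. g u = 0" unfolding T_def by auto
    then have "D = 0" unfolding D_def by simp
    then show False using Dpos D_def by simp
  qed
  define \<delta> where "\<delta> t = t - prevt T t" for t
  have dpos: "\<forall>t\<in>T. 0 < \<delta> t" unfolding \<delta>_def using prevt_props(1)[OF fT Tpos] by auto
  define A where "A t = {u\<in>V. 0 < g u \<and> t \<le> (g u)\<^sup>2}" for t
  define B where "B t = {u\<in>V. g u < 0 \<and> t \<le> (g u)\<^sup>2}" for t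
  define Q where "Q t = vol V w (A t \<union> B t) - 2 * cut_weight w (A t) (B t)" for t
  have AV: "A t \<subseteq> V" and BV: "B t \<subseteq> V" for t unfolding A_def B_def by auto
  have ABdisj: "A t \<inter> B t = {}" for t unfolding A_def B_def by auto
  define iS where "iS t u = (of_bool (u \<in> A t \<union> B t) :: real)" for t u
  define iAB where "iAB t u v = (of_bool (u \<in> A t \<and> v \<in> B t) :: real)" for t u v
  have Q_eq: "Q t = (\<Sum>u\<in>V. \<Sum>v\<in>V. w u v * (iS t u - iAB t u v - iAB t v u))" for t
  proof -
    have c2: "2 * cut_weight w (A t) (B t) = cut_weight w (A t) (B t) + cut_weight w (B t) (A t)"
      using cut_sym[OF fV AV BV sym] by simp
    have v1: "vol V w (A t \<union> B t) = (\<Sum>u\<in>V. \<Sum>v\<in>V. w u v * iS t u)"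
      unfolding iS_def by (rule vol_as[OF fV]) (use AV BV in auto)
    have c3: "cut_weight w (A t) (B t) = (\<Sum>u\<in>V. \<Sum>v\<in>V. w u v * iAB t u v)"
      unfolding iAB_def by (rule cut_as[OF fV AV BV])
    have c4: "cut_weight w (B t) (A t) = (\<Sum>u\<in>V. \<Sum>v\<in>V. w u v * iAB t v u)"
      unfolding iAB_def cut_as[OF fV BV AV] by (simp add: conj_commute)
    show ?thesis unfolding Q_def c2 unfolding v1 c3 c4
      by (simp add: sum_subtractf sum.distrib algebra_simps)
  qed
  have volS: "vol V w (A t \<union> B t) = (\<Sum>u\<in>V. deg V w u * iS t u)" for t
    unfolding iS_def vol_def using sum_subset_ind[OF fV, of "A t \<union> B t" "deg V w"] AV BV
    by (simp add: mult.commute)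
  have L1: "(\<Sum>t\<in>T. \<delta> t * iS t u) = (g u)\<^sup>2" if uV: "u \<in> V" for u
  proof (cases "g u = 0")
    case True
    then have "iS t u = 0" for t unfolding iS_def A_def B_def by auto
    then show ?thesis using True by simp
  next
    case False
    have mem: "(g u)\<^sup>2 \<in> insert 0 T" unfolding T_def using uV False by auto
    have "iS t u = of_bool (t \<le> (g u)\<^sup>2)" for t
      unfolding iS_def A_def B_def using uV False by auto
    then have "(\<Sum>t\<in>T. \<delta> t * iS t u) = (\<Sum>t\<in>T. (t - prevt T t) * of_bool (t \<le> (g u)\<^sup>2))"
      unfolding \<delta>_def by simp
    also have "\<dots> = (g u)\<^sup>2" using layer_ind[OF fT Tpos mem] .
    finally show ?thesis .
  qed
  define pm where "pm u v = (if 0 < g u \<and> g v < 0 then min ((g u)\<^sup>2) ((g v)\<^sup>2) else 0)" for u v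
  have L2: "(\<Sum>t\<in>T. \<delta> t * iAB t u v) = pm u v" if uV: "u \<in> V" and vV: "v \<in> V" for u v
  proof (cases "0 < g u \<and> g v < 0")
    case False
    then have "iAB t u v = 0" for t unfolding iAB_def A_def B_def by auto
    then show ?thesis using False unfolding pm_def by auto
  next
    case True
    have mem: "min ((g u)\<^sup>2) ((g v)\<^sup>2) \<in> insert 0 T" unfolding T_def using uV vV True
      by (auto simp: min_def)
    have "iAB t u v = of_bool (t \<le> min ((g u)\<^sup>2) ((g v)\<^sup>2))" for t
      unfolding iAB_def A_def B_def using uV vV True by auto
    then have "(\<Sum>t\<in>T. \<delta> t * iAB t u v) = (\<Sum>t\<in>T. (t - prevt T t) * of_bool (t \<le> min ((g u)\<^sup>2) ((g v)\<^sup>2)))"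
      unfolding \<delta>_def by simp
    also have "\<dots> = pm u v" using layer_ind[OF fT Tpos mem] True unfolding pm_def by simp
    finally show ?thesis .
  qed
  have sumvol: "(\<Sum>t\<in>T. \<delta> t * vol V w (A t \<union> B t)) = D"
  proof -
    have "(\<Sum>t\<in>T. \<delta> t * vol V w (A t \<union> B t)) = (\<Sum>t\<in>T. \<Sum>u\<in>V. deg V w u * (\<delta> t * iS t u))"
      unfolding volS by (simp add: sum_distrib_left algebra_simps)
    also have "\<dots> = (\<Sum>u\<in>V. deg V w u * (\<Sum>t\<in>T. \<delta> t * iS t u))"
      by (subst sum.swap) (simp add: sum_distrib_left)
    also have "\<dots> = D" unfolding D_def using L1 by (intro sum.cong) auto
    finally show ?thesis .
  qed
  have sumQ: "(\<Sum>t\<in>T. \<delta> t * Q t) = (\<Sum>u\<in>V. \<Sum>v\<in>V. w u v * ((g u)\<^sup>2 - pm u v - pm v u))"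
  proof -
    have "(\<Sum>t\<in>T. \<delta> t * Q t)
        = (\<Sum>t\<in>T. \<Sum>u\<in>V. \<Sum>v\<in>V. w u v * (\<delta> t * iS t u - \<delta> t * iAB t u v - \<delta> t * iAB t v u))"
      unfolding Q_eq by (simp add: sum_distrib_left algebra_simps)
    also have "\<dots> = (\<Sum>u\<in>V. \<Sum>t\<in>T. \<Sum>v\<in>V. w u v * (\<delta> t * iS t u - \<delta> t * iAB t u v - \<delta> t * iAB t v u))"
      by (rule sum.swap)
    also have "\<dots> = (\<Sum>u\<in>V. \<Sum>v\<in>V. \<Sum>t\<in>T. w u v * (\<delta> t * iS t u - \<delta> t * iAB t u v - \<delta> t * iAB t v u))"
      by (intro sum.cong refl sum.swap)
    also have "\<dots> = (\<Sum>u\<in>V. \<Sum>v\<in>V. w u v * ((\<Sum>t\<in>T. \<delta> t * iS t u) - (\<Sum>t\<in>T. \<delta> t * iAB t u v) - (\<Sum>t\<in>T. \<delta> t * iAB t v u)))"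
      by (intro sum.cong refl) (simp only: right_diff_distrib sum_subtractf sum_distrib_left)
    also have "\<dots> = (\<Sum>u\<in>V. \<Sum>v\<in>V. w u v * ((g u)\<^sup>2 - pm u v - pm v u))"
      using L1 L2 by (intro sum.cong refl) auto
    finally show ?thesis .
  qed
  have bound: "(\<Sum>u\<in>V. \<Sum>v\<in>V. w u v * ((g u)\<^sup>2 - pm u v - pm v u)) \<le> Num / 2"
  proof -
    define X where "X = (\<Sum>u\<in>V. \<Sum>v\<in>V. w u v * (g u)\<^sup>2)"
    define Y where "Y = (\<Sum>u\<in>V. \<Sum>v\<in>V. w u v * (g v)\<^sup>2)"
    define P where "P = (\<Sum>u\<in>V. \<Sum>v\<in>V. w u v * (pm u v + pm v u))"
    have sw: "X = Y" unfolding X_def Y_def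
      using swap_sym[OF sym, of "\<lambda>u v. (g u)\<^sup>2"] by simp
    have e1: "(\<Sum>u\<in>V. \<Sum>v\<in>V. w u v * ((g u)\<^sup>2 - pm u v - pm v u))
       = (\<Sum>u\<in>V. \<Sum>v\<in>V. w u v * (g u)\<^sup>2 - w u v * (pm u v + pm v u))"
      by (intro sum.cong refl) (simp add: algebra_simps)
    have e1': "\<dots> = X - P" unfolding X_def P_def by (simp only: sum_subtractf)
    have e2: "(\<Sum>u\<in>V. \<Sum>v\<in>V. w u v * ((g u)\<^sup>2 + (g v)\<^sup>2 - 2 * pm u v - 2 * pm v u))
       = (\<Sum>u\<in>V. \<Sum>v\<in>V. (w u v * (g u)\<^sup>2 + w u v * (g v)\<^sup>2) - 2 * (w u v * (pm u v + pm v u)))"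
      by (intro sum.cong refl) (simp add: algebra_simps)
    have e2': "\<dots> = X + Y - 2 * P" unfolding X_def Y_def P_def
      by (simp only: sum_subtractf sum.distrib sum_distrib_left)
    have ineq: "(\<Sum>u\<in>V. \<Sum>v\<in>V. w u v * ((g u)\<^sup>2 + (g v)\<^sup>2 - 2 * pm u v - 2 * pm v u)) \<le> Num"
      unfolding Num_def
    proof (intro sum_mono)
      fix u v assume "u \<in> V" "v \<in> V"
      then have "0 \<le> w u v" using wnn by auto
      moreover have "(g u)\<^sup>2 + (g v)\<^sup>2 - 2 * pm u v - 2 * pm v u \<le> \<bar>g u + g v\<bar> * (\<bar>g u\<bar> + \<bar>g v\<bar>)"
        unfolding pm_def by (rule pair_ineq)
      ultimately show "w u v * ((g u)\<^sup>2 + (g v)\<^sup>2 - 2 * pm u v - 2 * pm v u) \<le> w u v * (\<bar>g u + g v\<bar> * (\<bar>g u\<bar> + \<bar>g v\<bar>))"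
        by (meson mult_left_mono)
    qed
    show ?thesis using e1 e1' e2 e2' ineq sw by linarith
  qed
  have Dp: "0 < D" using Dpos D_def by simp
  have "\<exists>t\<in>T. Q t \<le> r * vol V w (A t \<union> B t)"
  proof (rule ccontr)
    assume "\<not> ?thesis"
    then have lt: "\<forall>t\<in>T. \<delta> t * (r * vol V w (A t \<union> B t)) < \<delta> t * Q t"
      using dpos by (simp add: not_le)
    have "(\<Sum>t\<in>T. \<delta> t * (r * vol V w (A t \<union> B t))) < (\<Sum>t\<in>T. \<delta> t * Q t)"
      by (rule sum_strict_mono[OF fT Tne]) (use lt in auto)
    also have "\<dots> \<le> Num / 2" using sumQ bound by simp
    also have "\<dots> = r * D" unfolding r_def using Dp by simp
    also have "\<dots> = (\<Sum>t\<in>T. \<delta> t * (r * vol V w (A t \<union> B t)))"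
      using sumvol by (simp only: sum_distrib_left[symmetric] mult.left_commute[of _ r])
    finally show False by simp
  qed
  then obtain t where tT: "t \<in> T" and tQ: "Q t \<le> r * vol V w (A t \<union> B t)" by blast
  obtain u where uV: "u \<in> V" and gu: "g u \<noteq> 0" and tu: "t = (g u)\<^sup>2" using tT unfolding T_def by auto
  have "u \<in> A t \<union> B t" unfolding A_def B_def using uV gu tu by (auto simp: linorder_neq_iff)
  then have ne: "A t \<union> B t \<noteq> {}" by auto
  have f1: "A t \<subseteq> {u\<in>V. 0 < g u}" "B t \<subseteq> {u\<in>V. g u < 0}" by (auto simp: A_def B_def)
  have f2: "vol V w (A t \<union> B t) - 2 * cut_weight w (A t) (B t) \<le> (Num / (2 * D)) * vol V w (A t \<union> B t)"
    using tQ unfolding Q_def r_def .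
  show ?thesis using f1 ne f2 unfolding Num_def D_def by blast
qed




lemma count_floor:
  fixes A B :: real and N :: nat
  assumes N: "0 < N" and AB: "A \<le> B"
  shows "real (card {r\<in>{..<N}. \<lfloor>(A - real r) / N\<rfloor> \<noteq> \<lfloor>(B - real r) / N\<rfloor>}) \<le> B - A + 1"
proof -
  define R where "R = {r\<in>{..<N}. \<lfloor>(A - real r) / N\<rfloor> \<noteq> \<lfloor>(B - real r) / N\<rfloor>}"
  define \<phi> where "\<phi> r = int r + \<lfloor>(B - real r) / N\<rfloor> * int N" for r
  have Nr: "(0::real) < real N" using N by simp
  have inj: "inj_on \<phi> R"
  proof (rule inj_onI)
    fix x y assume "x \<in> R" "y \<in> R" "\<phi> x = \<phi> y"
    then have "x < N" "y < N" unfolding R_def by auto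
    have "\<phi> x mod int N = int x mod int N" unfolding \<phi>_def by (rule mod_mult_self1)
    also have "\<dots> = int x" using \<open>x < N\<close> by (simp only: zmod_int[symmetric] mod_less)
    moreover have "\<phi> y mod int N = int y" unfolding \<phi>_def using \<open>y < N\<close> by simp
    ultimately show "x = y" using \<open>\<phi> x = \<phi> y\<close> by (metis of_nat_eq_iff)
  qed
  have img: "\<phi> ` R \<subseteq> {\<lfloor>A\<rfloor>+1..\<lfloor>B\<rfloor>}"
  proof
    fix z assume "z \<in> \<phi> ` R"
    then obtain r where rR: "r \<in> R" and z: "z = \<phi> r" by auto
    define n where "n = \<lfloor>(B - real r) / N\<rfloor>"
    define m where "m = \<lfloor>(A - real r) / N\<rfloor>"
    have nm: "n \<noteq> m" using rR unfolding R_def n_def m_def by auto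
    have "m \<le> n" unfolding n_def m_def
      by (intro floor_mono divide_right_mono) (use AB in auto)
    then have "m + 1 \<le> n" using nm by simp
    moreover have "(A - real r) / N < real_of_int m + 1" unfolding m_def by linarith
    ultimately have "(A - real r) / N < real_of_int n" by linarith
    then have lo: "A - real r < real_of_int n * N" using Nr by (simp add: divide_less_eq)
    have "real_of_int n \<le> (B - real r) / N" unfolding n_def by linarith
    then have hi: "real_of_int n * N \<le> B - real r" using Nr by (simp add: le_divide_eq)
    have zr: "real_of_int z = real r + real_of_int n * N" unfolding z \<phi>_def n_def by simp
    have "A < real_of_int z" using lo zr by linarith
    then have "\<lfloor>A\<rfloor> < z" by linarith
    moreover have "real_of_int z \<le> B" using hi zr by linarith
    then have "z \<le> \<lfloor>B\<rfloor>" by linarith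
    ultimately show "z \<in> {\<lfloor>A\<rfloor>+1..\<lfloor>B\<rfloor>}" by auto
  qed
  have "card R = card (\<phi> ` R)" using card_image[OF inj] by simp
  also have "\<dots> \<le> card {\<lfloor>A\<rfloor>+1..\<lfloor>B\<rfloor>}" by (rule card_mono[OF _ img]) simp
  finally have c: "card R \<le> nat (\<lfloor>B\<rfloor> - \<lfloor>A\<rfloor>)" by simp
  have m: "\<lfloor>A\<rfloor> \<le> \<lfloor>B\<rfloor>" using AB by (rule floor_mono)
  have f1: "real_of_int \<lfloor>B\<rfloor> \<le> B" by (rule of_int_floor_le)
  have f2: "A < real_of_int \<lfloor>A\<rfloor> + 1" by linarith
  have "real (nat (\<lfloor>B\<rfloor> - \<lfloor>A\<rfloor>)) = real_of_int (\<lfloor>B\<rfloor> - \<lfloor>A\<rfloor>)" using m by simp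
  also have "\<dots> \<le> B - A + 1" using f1 f2 by (simp only: of_int_diff)
  finally have "real (nat (\<lfloor>B\<rfloor> - \<lfloor>A\<rfloor>)) \<le> B - A + 1" .
  then show ?thesis unfolding R_def[symmetric] using c
    by (meson of_nat_le_iff order_trans)
qed

lemma count_floor_abs:
  fixes a b s :: real and N :: nat
  assumes N: "0 < N" and s: "0 < s"
  shows "real (card {r\<in>{..<N}. \<lfloor>(a - real r * s / N) / s\<rfloor> \<noteq> \<lfloor>(b - real r * s / N) / s\<rfloor>}) \<le> real N * \<bar>a - b\<bar> / s + 1"
proof -
  have Nr: "(0::real) < real N" using N by simp
  have eq: "(x - real r * s / N) / s = (x * N / s - real r) / N" for x r
    using Nr s by (simp add: field_simps)
  have sym: "{r\<in>{..<N}. \<lfloor>(a * N / s - real r) / N\<rfloor> \<noteq> \<lfloor>(b * N / s - real r) / N\<rfloor>}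
     = {r\<in>{..<N}. \<lfloor>(b * N / s - real r) / N\<rfloor> \<noteq> \<lfloor>(a * N / s - real r) / N\<rfloor>}" by auto
  have key: "real (card {r\<in>{..<N}. \<lfloor>(a * N / s - real r) / N\<rfloor> \<noteq> \<lfloor>(b * N / s - real r) / N\<rfloor>})
      \<le> \<bar>b * N / s - a * N / s\<bar> + 1"
  proof (cases "a \<le> b")
    case True
    then have "a * N / s \<le> b * N / s" using Nr s by (simp add: divide_right_mono mult_right_mono)
    then show ?thesis using count_floor[OF N] by fastforce
  next
    case False
    then have "b * N / s \<le> a * N / s" using Nr s by (simp add: divide_right_mono mult_right_mono)
    then show ?thesis using count_floor[OF N, of "b * N / s" "a * N / s"] sym by fastforce
  qed
  have e1: "b * N / s - a * N / s = (b - a) * (N / s)" by (simp add: diff_divide_distrib left_diff_distrib)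
  have e2: "\<bar>N / s\<bar> = N / s" using Nr s by simp
  have "\<bar>b * N / s - a * N / s\<bar> = real N * \<bar>a - b\<bar> / s"
    unfolding e1 abs_mult e2 by (simp add: abs_minus_commute)
  then show ?thesis using key unfolding eq by simp
qed




lemma shift_exists:
  fixes a b \<omega> :: "'i \<Rightarrow> real" and s :: real
  assumes fI: "finite I" and wn: "\<forall>p\<in>I. 0 \<le> \<omega> p" and s: "0 < s"
  shows "\<exists>\<sigma>. (\<Sum>p\<in>I. \<omega> p * of_bool (\<lfloor>(a p - \<sigma>) / s\<rfloor> \<noteq> \<lfloor>(b p - \<sigma>) / s\<rfloor>))
            \<le> 2 / s * (\<Sum>p\<in>I. \<omega> p * \<bar>a p - b p\<bar>)"
proof -
  define M where "M = 2 / s * (\<Sum>p\<in>I. \<omega> p * \<bar>a p - b p\<bar>)"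
  have "0 \<le> (\<Sum>p\<in>I. \<omega> p * \<bar>a p - b p\<bar>)" using wn by (intro sum_nonneg) auto
  then have Mnn: "0 \<le> M" unfolding M_def using s by simp
  define J where "J = {p\<in>I. a p \<noteq> b p}"
  show ?thesis
  proof (cases "J = {}")
    case True
    then have "\<forall>p\<in>I. a p = b p" unfolding J_def by auto
    then have "(\<Sum>p\<in>I. \<omega> p * of_bool (\<lfloor>(a p - 0) / s\<rfloor> \<noteq> \<lfloor>(b p - 0) / s\<rfloor>)) = 0" by simp
    then show ?thesis using Mnn unfolding M_def by (intro exI[of _ 0]) simp
  next
    case False
    define \<delta> where "\<delta> = Min ((\<lambda>p. \<bar>a p - b p\<bar>) ` J)"
    have fJ: "finite J" unfolding J_def using fI by auto
    have \<delta>pos: "0 < \<delta>" unfolding \<delta>_def using fJ False by (subst Min_gr_iff) (auto simp: J_def)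
    have \<delta>le: "\<delta> \<le> \<bar>a p - b p\<bar>" if "p \<in> J" for p unfolding \<delta>_def using fJ that by (intro Min_le) auto
    define N where "N = nat \<lceil>s / \<delta>\<rceil> + 1"
    have Npos: "0 < N" unfolding N_def by simp
    have Nr: "(0::real) < real N" using Npos by simp
    have sN: "s / \<delta> \<le> real N" unfolding N_def by linarith
    define ind where "ind r p = (of_bool (\<lfloor>(a p - real r * s / N) / s\<rfloor> \<noteq> \<lfloor>(b p - real r * s / N) / s\<rfloor>) :: real)" for r p
    have cardb: "(\<Sum>r\<in>{..<N}. ind r p) \<le> 2 * real N * \<bar>a p - b p\<bar> / s" if pI: "p \<in> I" for p
    proof (cases "a p = b p")
      case True
      then have "ind r p = 0" for r unfolding ind_def by simp
      then show ?thesis using s by simp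
    next
      case False
      then have "p \<in> J" unfolding J_def using pI by auto
      then have "\<delta> \<le> \<bar>a p - b p\<bar>" by (rule \<delta>le)
      then have "s / \<delta> * \<delta> \<le> real N * \<bar>a p - b p\<bar>" using sN \<delta>pos by (intro mult_mono) auto
      then have "s \<le> real N * \<bar>a p - b p\<bar>" using \<delta>pos by simp
      then have one: "1 \<le> real N * \<bar>a p - b p\<bar> / s" using s by simp
      have "(\<Sum>r\<in>{..<N}. ind r p) = real (card {r\<in>{..<N}. \<lfloor>(a p - real r * s / N) / s\<rfloor> \<noteq> \<lfloor>(b p - real r * s / N) / s\<rfloor>})"
        unfolding ind_def by (subst sum_of_bool_eq) (simp, rule arg_cong[where f="\<lambda>X. real (card X)"], blast)
      also have "\<dots> \<le> real N * \<bar>a p - b p\<bar> / s + 1" by (rule count_floor_abs[OF Npos s])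
      also have "\<dots> \<le> 2 * real N * \<bar>a p - b p\<bar> / s"
      proof -
        have e: "2 * real N * \<bar>a p - b p\<bar> / s = 2 * (real N * \<bar>a p - b p\<bar> / s)" by simp
        have "real N * \<bar>a p - b p\<bar> / s + 1 \<le> 2 * (real N * \<bar>a p - b p\<bar> / s)" using one by (smt (verit))
        then show ?thesis by (subst e)
      qed
      finally show ?thesis .
    qed
    define val where "val r = (\<Sum>p\<in>I. \<omega> p * ind r p)" for r
    have total: "(\<Sum>r\<in>{..<N}. val r) \<le> real N * M"
    proof -
      have "(\<Sum>r\<in>{..<N}. val r) = (\<Sum>p\<in>I. \<omega> p * (\<Sum>r\<in>{..<N}. ind r p))"
        unfolding val_def by (subst sum.swap) (simp add: sum_distrib_left)
      also have "\<dots> \<le> (\<Sum>p\<in>I. \<omega> p * (2 * real N * \<bar>a p - b p\<bar> / s))"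
        using cardb wn by (intro sum_mono mult_left_mono) auto
      also have "\<dots> = real N * M" unfolding M_def by (simp add: sum_distrib_left algebra_simps)
      finally show ?thesis .
    qed
    have "\<exists>r\<in>{..<N}. val r \<le> M"
    proof (rule ccontr)
      assume "\<not> ?thesis"
      then have "\<forall>r\<in>{..<N}. M < val r" by (auto simp: not_le)
      then have "(\<Sum>r\<in>{..<N}. M) < (\<Sum>r\<in>{..<N}. val r)"
        by (intro sum_strict_mono) (use Npos in auto)
      then show False using total by simp
    qed
    then obtain r where "val r \<le> M" by blast
    then show ?thesis unfolding val_def ind_def M_def by (intro exI[of _ "real r * s / N"])
  qed
qed




lemma sub_group:
  fixes W :: "'a \<Rightarrow> real"
  assumes "finite X" "\<forall>x\<in>X. 0 \<le> W x \<and> W x \<le> M" "1 \<le> M" "1/2 \<le> sum W X"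
  shows "\<exists>Y\<subseteq>X. 1/2 \<le> sum W Y \<and> sum W Y \<le> M"
  using assms
proof (induction X rule: finite_induct)
  case empty
  then show ?case by simp
next
  case (insert a X)
  show ?case
  proof (cases "1/2 \<le> sum W X")
    case True
    then obtain Y where "Y \<subseteq> X" "1/2 \<le> sum W Y" "sum W Y \<le> M" using insert by auto
    then show ?thesis by blast
  next
    case False
    show ?thesis
    proof (cases "1/2 \<le> W a")
      case True
      then show ?thesis using insert by (intro exI[of _ "{a}"]) auto
    next
      case F2: False
      have "sum W (insert a X) = W a + sum W X" using insert by simp
      then show ?thesis using insert False F2 by (intro exI[of _ "insert a X"]) auto
    qed
  qed
qed

lemma groups_aux:
  fixes W :: "'a \<Rightarrow> real"
  assumes "1 \<le> M"
  shows "\<forall>X. finite X \<longrightarrow> (\<forall>x\<in>X. 0 \<le> W x \<and> W x \<le> M) \<longrightarrow> real j * M + 1/2 \<le> sum W X \<longrightarrow>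
    (\<exists>Y. (\<forall>i\<le>j. Y i \<subseteq> X \<and> 1/2 \<le> sum W (Y i)) \<and> (\<forall>i\<le>j. \<forall>i'\<le>j. i \<noteq> i' \<longrightarrow> Y i \<inter> Y i' = {}))"
proof (induction j)
  case 0
  show ?case
  proof (intro allI impI)
    fix X assume "finite X" "\<forall>x\<in>X. 0 \<le> W x \<and> W x \<le> M" "real 0 * M + 1/2 \<le> sum W X"
    then obtain Y0 where "Y0 \<subseteq> X" "1/2 \<le> sum W Y0" using sub_group[of X W M] assms by auto
    then show "\<exists>Y. (\<forall>i::nat\<le>0. Y i \<subseteq> X \<and> 1/2 \<le> sum W (Y i)) \<and> (\<forall>i::nat\<le>0. \<forall>i'::nat\<le>0. i \<noteq> i' \<longrightarrow> Y i \<inter> Y i' = {})"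
      by (intro exI[of _ "\<lambda>_. Y0"]) (auto dest!: le_0_eq[THEN iffD1])
  qed
next
  case (Suc j)
  show ?case
  proof (intro allI impI)
    fix X assume fX: "finite X" and bW: "\<forall>x\<in>X. 0 \<le> W x \<and> W x \<le> M" and tot: "real (Suc j) * M + 1/2 \<le> sum W X"
    have "0 \<le> real (Suc j) * M" using assms by simp
    then have "1/2 \<le> sum W X" using tot by linarith
    then obtain Y0 where Y0X: "Y0 \<subseteq> X" and Y0a: "1/2 \<le> sum W Y0" and Y0b: "sum W Y0 \<le> M"
      using sub_group[OF fX bW assms] by auto
    define X' where "X' = X - Y0"
    have fX': "finite X'" unfolding X'_def using fX by auto
    have bW': "\<forall>x\<in>X'. 0 \<le> W x \<and> W x \<le> M" unfolding X'_def using bW by auto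
    have "sum W X = sum W Y0 + sum W X'" unfolding X'_def
      using sum.subset_diff[OF Y0X fX] by (simp add: add.commute)
    then have tot': "real j * M + 1/2 \<le> sum W X'" using tot Y0b by (simp add: algebra_simps)
    have "\<exists>Y'. (\<forall>i\<le>j. Y' i \<subseteq> X' \<and> 1/2 \<le> sum W (Y' i)) \<and> (\<forall>i\<le>j. \<forall>i'\<le>j. i \<noteq> i' \<longrightarrow> Y' i \<inter> Y' i' = {})"
      by (rule Suc.IH[rule_format, OF fX' _ tot']) (use bW' in blast)
    then obtain Y' where Y'1: "\<forall>i\<le>j. Y' i \<subseteq> X' \<and> 1/2 \<le> sum W (Y' i)"
      and Y'2: "\<forall>i\<le>j. \<forall>i'\<le>j. i \<noteq> i' \<longrightarrow> Y' i \<inter> Y' i' = {}" by blast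
    define Y where "Y i = (if i = 0 then Y0 else Y' (i - 1))" for i
    have "\<forall>i\<le>Suc j. Y i \<subseteq> X \<and> 1/2 \<le> sum W (Y i)"
    proof (intro allI impI)
      fix i assume i: "i \<le> Suc j"
      show "Y i \<subseteq> X \<and> 1/2 \<le> sum W (Y i)"
      proof (cases "i = 0")
        case True
        then show ?thesis unfolding Y_def using Y0X Y0a by simp
      next
        case False
        then have "i - 1 \<le> j" using i by simp
        then have "Y' (i - 1) \<subseteq> X' \<and> 1/2 \<le> sum W (Y' (i - 1))" using Y'1 by blast
        then show ?thesis unfolding Y_def X'_def using False by auto
      qed
    qed
    moreover have "\<forall>i\<le>Suc j. \<forall>i'\<le>Suc j. i \<noteq> i' \<longrightarrow> Y i \<inter> Y i' = {}"
    proof (intro allI impI)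
      fix i i' assume "i \<le> Suc j" "i' \<le> Suc j" "i \<noteq> i'"
      show "Y i \<inter> Y i' = {}"
      proof (cases "i = 0 \<or> i' = 0")
        case True
        have sub: "Y i' \<subseteq> X'" if "i' \<noteq> 0" "i' \<le> Suc j" for i'
        proof -
          have "i' - 1 \<le> j" using that by simp
          then show ?thesis unfolding Y_def using that Y'1 by auto
        qed
        show ?thesis
        proof (cases "i = 0")
          case True
          then have "i' \<noteq> 0" using \<open>i \<noteq> i'\<close> by simp
          then have "Y i' \<subseteq> X'" using sub \<open>i' \<le> Suc j\<close> by blast
          then show ?thesis unfolding X'_def using True by (auto simp: Y_def)
        next
          case False
          then have "i' = 0" using \<open>i = 0 \<or> i' = 0\<close> by simp
          have "Y i \<subseteq> X'" using sub False \<open>i \<le> Suc j\<close> by blast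
          then show ?thesis unfolding X'_def using \<open>i' = 0\<close> by (auto simp: Y_def)
        qed
      next
        case False
        then have a: "i - 1 \<le> j" "i' - 1 \<le> j" "i - 1 \<noteq> i' - 1"
          using \<open>i \<le> Suc j\<close> \<open>i' \<le> Suc j\<close> \<open>i \<noteq> i'\<close> by auto
        then have "Y' (i - 1) \<inter> Y' (i' - 1) = {}" using Y'2 by blast
        then show ?thesis unfolding Y_def using False by simp
      qed
    qed
    ultimately show "\<exists>Y. (\<forall>i\<le>Suc j. Y i \<subseteq> X \<and> 1/2 \<le> sum W (Y i)) \<and> (\<forall>i\<le>Suc j. \<forall>i'\<le>Suc j. i \<noteq> i' \<longrightarrow> Y i \<inter> Y i' = {})"
      by blast
  qed
qed




definition nk :: "nat \<Rightarrow> (nat \<Rightarrow> real) \<Rightarrow> real" where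
  "nk k a = L2_set a {..<k}"

definition ipk :: "nat \<Rightarrow> (nat \<Rightarrow> real) \<Rightarrow> (nat \<Rightarrow> real) \<Rightarrow> real" where
  "ipk k a b = (\<Sum>i<k. a i * b i)"

lemma nk_nonneg: "0 \<le> nk k a" unfolding nk_def by simp

lemma nk_sq: "(nk k a)\<^sup>2 = (\<Sum>i<k. (a i)\<^sup>2)"
  unfolding nk_def L2_set_def by (simp add: sum_nonneg)

lemma ipk_abs: "\<bar>ipk k a b\<bar> \<le> nk k a * nk k b"
proof -
  have "\<bar>ipk k a b\<bar> \<le> (\<Sum>i<k. \<bar>a i\<bar> * \<bar>b i\<bar>)" unfolding ipk_def
    by (rule order_trans[OF sum_abs]) (simp add: abs_mult)
  also have "\<dots> \<le> nk k a * nk k b" unfolding nk_def by (rule L2_set_mult_ineq)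
  finally show ?thesis .
qed

lemma nk_add: "nk k (\<lambda>i. a i + b i) \<le> nk k a + nk k b"
  unfolding nk_def by (rule L2_set_triangle_ineq)

lemma nk_neg: "nk k (\<lambda>i. - a i) = nk k a"
  unfolding nk_def L2_set_def by simp

lemma nk_scale: "nk k (\<lambda>i. r * a i) = \<bar>r\<bar> * nk k a"
  unfolding nk_def using L2_set_right_distrib[of "\<bar>r\<bar>" a "{..<k}"]
  unfolding L2_set_def by (simp add: power_mult_distrib)

lemma nk_sum_sq: "(nk k (\<lambda>i. a i + b i))\<^sup>2 = (nk k a)\<^sup>2 + (nk k b)\<^sup>2 + 2 * ipk k a b"
  unfolding nk_sq ipk_def by (simp add: power2_sum sum.distrib sum_distrib_left mult.assoc)

lemma nk_diff_sq: "(nk k (\<lambda>i. a i - b i))\<^sup>2 = (nk k a)\<^sup>2 + (nk k b)\<^sup>2 - 2 * ipk k a b"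
  unfolding nk_sq ipk_def by (simp add: power2_diff sum.distrib sum_subtractf sum_distrib_left mult.assoc)

lemma nk_rev_tri: "\<bar>nk k a - nk k b\<bar> \<le> nk k (\<lambda>i. a i + b i)"
proof -
  have 1: "nk k a \<le> nk k (\<lambda>i. a i + b i) + nk k b"
  proof -
    have "nk k a = nk k (\<lambda>i. (a i + b i) + (- b i))" by simp
    also have "\<dots> \<le> nk k (\<lambda>i. a i + b i) + nk k (\<lambda>i. - b i)" by (rule nk_add)
    finally show ?thesis by (simp add: nk_neg)
  qed
  have 2: "nk k b \<le> nk k (\<lambda>i. a i + b i) + nk k a"
  proof -
    have "nk k b = nk k (\<lambda>i. (a i + b i) + (- a i))" by simp
    also have "\<dots> \<le> nk k (\<lambda>i. a i + b i) + nk k (\<lambda>i. - a i)" by (rule nk_add)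
    finally show ?thesis by (simp add: nk_neg)
  qed
  show ?thesis using 1 2 by linarith
qed

lemma unit_vec:
  assumes "nk k a \<noteq> 0"
  shows "nk k (\<lambda>i. a i / nk k a) = 1"
proof -
  have "nk k (\<lambda>i. a i / nk k a) = nk k (\<lambda>i. (1 / nk k a) * a i)" by simp
  also have "\<dots> = \<bar>1 / nk k a\<bar> * nk k a" by (rule nk_scale)
  also have "\<dots> = 1" using assms nk_nonneg[of k a] by simp
  finally show ?thesis .
qed

lemma geom:
  assumes a: "nk k a \<noteq> 0" and b: "nk k b \<noteq> 0"
  shows "nk k (\<lambda>i. a i / nk k a + b i / nk k b) * nk k b \<le> 2 * nk k (\<lambda>i. a i + b i)"
proof -
  have bpos: "0 < nk k b" using b nk_nonneg[of k b] by simp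
  have "nk k (\<lambda>i. a i / nk k a + b i / nk k b) * nk k b
      = nk k (\<lambda>i. nk k b * (a i / nk k a + b i / nk k b))"
    using nk_scale[of k "nk k b" "\<lambda>i. a i / nk k a + b i / nk k b"] bpos by (simp add: mult.commute)
  also have "\<dots> = nk k (\<lambda>i. (nk k b - nk k a) * (a i / nk k a) + (a i + b i))"
    using a b by (intro arg_cong[where f="nk k"] ext) (simp add: field_simps)
  also have "\<dots> \<le> nk k (\<lambda>i. (nk k b - nk k a) * (a i / nk k a)) + nk k (\<lambda>i. a i + b i)"
    by (rule nk_add)
  also have "\<dots> = \<bar>nk k b - nk k a\<bar> + nk k (\<lambda>i. a i + b i)"
    using nk_scale[of k "nk k b - nk k a" "\<lambda>i. a i / nk k a"] unit_vec[OF a] by simp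
  also have "\<dots> \<le> 2 * nk k (\<lambda>i. a i + b i)"
    using nk_rev_tri[of k b a] by (simp add: add.commute abs_minus_commute)
  finally show ?thesis .
qed

lemma sum_abs_le_sqrt:
  "(\<Sum>j<k. \<bar>a j\<bar>) \<le> sqrt (real k) * nk k a"
proof -
  have "(\<Sum>j<k. \<bar>a j\<bar>) = (\<Sum>j<k. \<bar>(\<lambda>_. 1::real) j\<bar> * \<bar>a j\<bar>)" by simp
  also have "\<dots> \<le> L2_set (\<lambda>_. 1::real) {..<k} * L2_set a {..<k}" by (rule L2_set_mult_ineq)
  also have "\<dots> = sqrt (real k) * nk k a" unfolding nk_def L2_set_constant by simp
  finally show ?thesis .
qed




locale thm_setup =
  fixes V :: "nat set" and w :: "nat \<Rightarrow> nat \<Rightarrow> real" and k :: nat and f :: "nat \<Rightarrow> nat \<Rightarrow> real"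
  assumes wg: "weighted_graph V w"
    and orth: "\<forall>i<k. \<forall>j<k. ip_mu V w (f i) (f j) = (if i = j then 1 else 0)"
    and kpos: "0 < k"
begin

definition F where "F u = (\<lambda>i. f i u)"
definition nF where "nF u = nk k (F u)"
definition x where "x u = (\<lambda>i. f i u / nF u)"
definition V' where "V' = {u\<in>V. nF u \<noteq> 0}"

lemma fV: "finite V" and sym: "\<forall>u\<in>V. \<forall>v\<in>V. w u v = w v u" and wnn: "\<forall>u\<in>V. \<forall>v\<in>V. 0 \<le> w u v"
  and degpos: "\<forall>u\<in>V. 0 < deg V w u"
  using wg unfolding weighted_graph_def by auto

lemma nF_nonneg: "0 \<le> nF u" unfolding nF_def by (rule nk_nonneg)

lemma nF_sq: "(nF u)\<^sup>2 = (\<Sum>i<k. (f i u)\<^sup>2)" unfolding nF_def nk_sq F_def by simp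

lemma isotropy: "(\<Sum>u\<in>V. deg V w u * (ipk k (F u) y)\<^sup>2) = (nk k y)\<^sup>2"
proof -
  have "(\<Sum>u\<in>V. deg V w u * (ipk k (F u) y)\<^sup>2)
      = (\<Sum>u\<in>V. \<Sum>i<k. \<Sum>j<k. y i * y j * (deg V w u * f i u * f j u))"
    unfolding ipk_def F_def power2_eq_square sum_product
    by (simp add: sum_distrib_left mult_ac)
  also have "\<dots> = (\<Sum>i<k. \<Sum>j<k. y i * y j * (\<Sum>u\<in>V. deg V w u * f i u * f j u))"
    by (simp add: sum_distrib_left sum.swap[of _ V])
  also have "\<dots> = (\<Sum>i<k. \<Sum>j<k. y i * y j * (if i = j then 1 else 0))"
    using orth unfolding ip_mu_def by (intro sum.cong refl) auto
  also have "\<dots> = (\<Sum>i<k. (y i)\<^sup>2)"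
    by (simp add: power2_eq_square if_distrib cong: if_cong)
  also have "\<dots> = (nk k y)\<^sup>2" by (simp add: nk_sq)
  finally show ?thesis .
qed

lemma total_mass: "(\<Sum>u\<in>V. deg V w u * (nF u)\<^sup>2) = real k"
proof -
  have "(\<Sum>u\<in>V. deg V w u * (nF u)\<^sup>2) = (\<Sum>i<k. \<Sum>u\<in>V. deg V w u * f i u * f i u)"
    unfolding nF_sq by (simp add: sum_distrib_left sum.swap[of _ V] power2_eq_square mult_ac)
  also have "\<dots> = (\<Sum>i<k. 1)"
    using orth unfolding ip_mu_def by (intro sum.cong refl) auto
  finally show ?thesis by simp
qed

lemma F_eq: "u \<in> V' \<Longrightarrow> f i u = nF u * x u i"
  unfolding x_def V'_def by auto

lemma x_unit: "u \<in> V' \<Longrightarrow> nk k (x u) = 1"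
  unfolding x_def V'_def nF_def using unit_vec[of k "F u"] by (auto simp: F_def)

lemma F_zero: "u \<in> V \<Longrightarrow> u \<notin> V' \<Longrightarrow> i < k \<Longrightarrow> f i u = 0"
proof -
  assume "u \<in> V" "u \<notin> V'" "i < k"
  then have "nF u = 0" unfolding V'_def by auto
  then have "(\<Sum>i<k. (f i u)\<^sup>2) = 0" using nF_sq[of u] by simp
  then show "f i u = 0" using \<open>i < k\<close> by (simp add: sum_nonneg_eq_0_iff)
qed

end




context thm_setup
begin

definition s where "s = 1 / (2 * real k)"
definition cc :: "(nat \<Rightarrow> real) \<Rightarrow> (nat \<Rightarrow> real) \<Rightarrow> (nat \<Rightarrow> int)" where
  "cc \<sigma> y = (\<lambda>j. if j < k then \<lfloor>(y j - \<sigma> j) / s\<rfloor> else 0)"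
definition kap where "kap \<sigma> y = (cc \<sigma> y, cc \<sigma> (\<lambda>j. - y j))"
definition ckey where "ckey \<sigma> u = {kap \<sigma> (x u), prod.swap (kap \<sigma> (x u))}"
definition rep :: "((nat \<Rightarrow> int) \<times> (nat \<Rightarrow> int)) set \<Rightarrow> (nat \<Rightarrow> int) \<times> (nat \<Rightarrow> int)" where
  "rep K = (SOME z. z \<in> K)"
definition sg where "sg \<sigma> u = (if kap \<sigma> (x u) = rep (ckey \<sigma> u) then 1 else -1 :: real)"
definition p where "p \<sigma> u = (\<lambda>j. sg \<sigma> u * x u j)"

lemma s_pos: "0 < s" unfolding s_def using kpos by simp

lemma ks2: "real k * s\<^sup>2 = 1 / (4 * real k)"
  unfolding s_def using kpos by (simp add: power2_eq_square field_simps)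

lemma sg_sq: "sg \<sigma> u * sg \<sigma> u = 1" unfolding sg_def by simp
lemma sg_abs: "\<bar>sg \<sigma> u\<bar> = 1" unfolding sg_def by simp

lemma kap_p: "kap \<sigma> (p \<sigma> u) = rep (ckey \<sigma> u)"
proof -
  have mem: "rep (ckey \<sigma> u) \<in> ckey \<sigma> u" unfolding rep_def ckey_def by (rule someI) blast
  show ?thesis
  proof (cases "kap \<sigma> (x u) = rep (ckey \<sigma> u)")
    case True
    then show ?thesis unfolding p_def sg_def by simp
  next
    case False
    then have "rep (ckey \<sigma> u) = prod.swap (kap \<sigma> (x u))" using mem unfolding ckey_def by auto
    moreover have "p \<sigma> u = (\<lambda>j. - x u j)" unfolding p_def sg_def using False by simp
    ultimately show ?thesis unfolding kap_def by simp
  qed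
qed

lemma same_class_cc: "ckey \<sigma> u = ckey \<sigma> v \<Longrightarrow> cc \<sigma> (p \<sigma> u) = cc \<sigma> (p \<sigma> v)"
proof -
  assume "ckey \<sigma> u = ckey \<sigma> v"
  then have "kap \<sigma> (p \<sigma> u) = kap \<sigma> (p \<sigma> v)" using kap_p[of \<sigma> u] kap_p[of \<sigma> v] by simp
  then show ?thesis unfolding kap_def by simp
qed

lemma floor_eq_close:
  assumes "\<lfloor>(a - c) / s\<rfloor> = \<lfloor>(b - c) / s\<rfloor>"
  shows "\<bar>a - b\<bar> < s"
proof -
  define n where "n = \<lfloor>(a - c) / s\<rfloor>"
  have "real_of_int n \<le> (a - c) / s" "(a - c) / s < real_of_int n + 1" unfolding n_def by linarith+
  moreover have "real_of_int n \<le> (b - c) / s" "(b - c) / s < real_of_int n + 1" unfolding n_def assms by linarith+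
  ultimately have "\<bar>(a - c) / s - (b - c) / s\<bar> < 1" by linarith
  then have "\<bar>(a - b) / s\<bar> < 1" by (simp add: diff_divide_distrib)
  then have "\<bar>a - b\<bar> / s < 1" using s_pos by (simp only: abs_divide abs_of_pos)
  then show ?thesis using s_pos by (metis pos_divide_less_eq mult_1)
qed

lemma cc_close:
  assumes "cc \<sigma> a = cc \<sigma> b"
  shows "(nk k (\<lambda>j. a j - b j))\<^sup>2 \<le> 1 / (4 * real k)"
proof -
  have "\<bar>a j - b j\<bar> < s" if "j < k" for j
  proof -
    have "cc \<sigma> a j = cc \<sigma> b j" using assms by simp
    then have "\<lfloor>(a j - \<sigma> j) / s\<rfloor> = \<lfloor>(b j - \<sigma> j) / s\<rfloor>" unfolding cc_def using that by simp
    then show ?thesis by (rule floor_eq_close)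
  qed
  then have "(a j - b j)\<^sup>2 \<le> s\<^sup>2" if "j < k" for j
    using that by (metis abs_le_square_iff less_imp_le s_pos abs_of_pos)
  then have "(\<Sum>j<k. (a j - b j)\<^sup>2) \<le> (\<Sum>j<k. s\<^sup>2)" by (intro sum_mono) auto
  then show ?thesis unfolding nk_sq using ks2 by simp
qed

lemma p_unit: "u \<in> V' \<Longrightarrow> nk k (p \<sigma> u) = 1"
  unfolding p_def using nk_scale[of k "sg \<sigma> u" "x u"] sg_abs x_unit by simp

lemma ipk_p: "ipk k (p \<sigma> u) (p \<sigma> v) = sg \<sigma> u * sg \<sigma> v * ipk k (x u) (x v)"
  unfolding ipk_def p_def by (simp add: sum_distrib_left mult_ac)

lemma inner_close:
  assumes "u \<in> V'" "v \<in> V'" "ckey \<sigma> u = ckey \<sigma> v"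
  shows "1 - 1 / (8 * real k) \<le> ipk k (p \<sigma> u) (p \<sigma> v)"
proof -
  have "(nk k (\<lambda>j. p \<sigma> u j - p \<sigma> v j))\<^sup>2 \<le> 1 / (4 * real k)"
    by (rule cc_close[OF same_class_cc[OF assms(3)]])
  moreover have "(nk k (\<lambda>j. p \<sigma> u j - p \<sigma> v j))\<^sup>2 = 2 - 2 * ipk k (p \<sigma> u) (p \<sigma> v)"
    using nk_diff_sq[of k "p \<sigma> u" "p \<sigma> v"] p_unit[OF assms(1)] p_unit[OF assms(2)] by simp
  ultimately show ?thesis by simp
qed

lemma class_mass:
  assumes u0: "u0 \<in> V'"
  shows "(\<Sum>v\<in>{v\<in>V'. ckey \<sigma> v = ckey \<sigma> u0}. deg V w v * (nF v)\<^sup>2) \<le> 1 + 1 / (2 * real k)"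
proof -
  define t where "t = 1 / (8 * real k)"
  have t: "0 < t" "t \<le> 1/8" unfolding t_def using kpos by auto
  define C where "C = {v\<in>V'. ckey \<sigma> v = ckey \<sigma> u0}"
  have CV: "C \<subseteq> V" unfolding C_def V'_def by auto
  have each: "deg V w v * (nF v)\<^sup>2 * (1 - t)\<^sup>2 \<le> deg V w v * (ipk k (F v) (x u0))\<^sup>2" if vC: "v \<in> C" for v
  proof -
    have vV': "v \<in> V'" and ck: "ckey \<sigma> v = ckey \<sigma> u0" using vC unfolding C_def by auto
    have "ipk k (F v) (x u0) = nF v * ipk k (x v) (x u0)"
      unfolding ipk_def F_def using F_eq[OF vV'] by (simp add: sum_distrib_left mult_ac)
    moreover have "(ipk k (x v) (x u0))\<^sup>2 = (ipk k (p \<sigma> v) (p \<sigma> u0))\<^sup>2"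
      unfolding ipk_p power2_eq_square using sg_sq[of \<sigma> v] sg_sq[of \<sigma> u0]
      by (simp add: mult_ac)
    moreover have "1 - t \<le> ipk k (p \<sigma> v) (p \<sigma> u0)" unfolding t_def by (rule inner_close[OF vV' u0 ck])
    then have "(1 - t)\<^sup>2 \<le> (ipk k (p \<sigma> v) (p \<sigma> u0))\<^sup>2" using t by (intro power_mono) auto
    moreover have "0 \<le> deg V w v" using degpos vV' unfolding V'_def by (auto intro: less_imp_le)
    ultimately show ?thesis by (simp add: power_mult_distrib mult_left_mono mult.assoc)
  qed
  have "(\<Sum>v\<in>C. deg V w v * (nF v)\<^sup>2) * (1 - t)\<^sup>2 = (\<Sum>v\<in>C. deg V w v * (nF v)\<^sup>2 * (1 - t)\<^sup>2)"
    by (simp add: sum_distrib_right)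
  also have "\<dots> \<le> (\<Sum>v\<in>C. deg V w v * (ipk k (F v) (x u0))\<^sup>2)" by (intro sum_mono each)
  also have "\<dots> \<le> (\<Sum>v\<in>V. deg V w v * (ipk k (F v) (x u0))\<^sup>2)"
    using CV fV degpos by (intro sum_mono2) (auto intro: less_imp_le)
  also have "\<dots> = 1" using isotropy x_unit[OF u0] by simp
  finally have W: "(\<Sum>v\<in>C. deg V w v * (nF v)\<^sup>2) * (1 - t)\<^sup>2 \<le> 1" .
  have "1 \<le> (1 - t)\<^sup>2 * (1 + 4 * t)"
  proof -
    have "(1 - t)\<^sup>2 * (1 + 4 * t) = 1 + t * (2 - 7 * t + 4 * t\<^sup>2)" by (simp add: power2_eq_square algebra_simps)
    moreover have "0 \<le> t * (2 - 7 * t + 4 * t\<^sup>2)" using t by (intro mult_nonneg_nonneg) auto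
    ultimately show ?thesis by simp
  qed
  have pos: "0 < (1 - t)\<^sup>2" using t by simp
  have "(\<Sum>v\<in>C. deg V w v * (nF v)\<^sup>2) \<le> 1 + 4 * t"
  proof (rule ccontr)
    assume "\<not> ?thesis"
    then have "(1 + 4 * t) * (1 - t)\<^sup>2 < (\<Sum>v\<in>C. deg V w v * (nF v)\<^sup>2) * (1 - t)\<^sup>2"
      using pos by (intro mult_strict_right_mono) auto
    then show False using W \<open>1 \<le> (1 - t)\<^sup>2 * (1 + 4 * t)\<close> by (simp add: mult.commute)
  qed
  then show ?thesis unfolding C_def t_def using kpos by simp
qed

end




context thm_setup
begin

definition mass where "mass u = deg V w u * (nF u)\<^sup>2"
definition Wt where "Wt \<sigma> K = (\<Sum>u\<in>{u\<in>V'. ckey \<sigma> u = K}. mass u)"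
definition sepw where "sepw \<sigma> u v = (if u \<in> V' \<and> v \<in> V' \<and> ckey \<sigma> u \<noteq> ckey \<sigma> v then (nF u)\<^sup>2 + (nF v)\<^sup>2 else 0)"
definition gfun where "gfun \<sigma> Y u = (if u \<in> V' \<and> ckey \<sigma> u \<in> Y then sg \<sigma> u * nF u else 0)"
definition nS where "nS u v = nk k (\<lambda>i. f i u + f i v)"

lemma fV': "finite V'" unfolding V'_def using fV by auto
lemma V'V: "V' \<subseteq> V" unfolding V'_def by auto

lemma mass_nonneg: "u \<in> V \<Longrightarrow> 0 \<le> mass u"
  unfolding mass_def using degpos by (auto intro: less_imp_le)

lemma mass_V': "(\<Sum>u\<in>V'. mass u) = real k"
proof -
  have "(\<Sum>u\<in>V'. mass u) = (\<Sum>u\<in>V. mass u)"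
    using V'V fV by (intro sum.mono_neutral_left) (auto simp: mass_def V'_def)
  then show ?thesis using total_mass unfolding mass_def by simp
qed

lemma Wt_sum: "(\<Sum>K\<in>ckey \<sigma> ` V'. Wt \<sigma> K) = real k"
  unfolding Wt_def using sum.group[where S=V' and T="ckey \<sigma> ` V'" and g="ckey \<sigma>" and h=mass] mass_V' fV' by simp

lemma Wt_bound: "K \<in> ckey \<sigma> ` V' \<Longrightarrow> 0 \<le> Wt \<sigma> K \<and> Wt \<sigma> K \<le> 1 + 1 / (2 * real k)"
proof -
  assume "K \<in> ckey \<sigma> ` V'"
  then obtain u0 where u0: "u0 \<in> V'" "K = ckey \<sigma> u0" by auto
  have "0 \<le> Wt \<sigma> K" unfolding Wt_def using V'V mass_nonneg by (intro sum_nonneg) auto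
  moreover have "Wt \<sigma> K \<le> 1 + 1 / (2 * real k)"
    unfolding Wt_def mass_def u0(2) using class_mass[OF u0(1)] by simp
  ultimately show ?thesis by simp
qed

lemma groups_exist:
  "\<exists>Y. (\<forall>i<k. Y i \<subseteq> ckey \<sigma> ` V' \<and> 1/2 \<le> (\<Sum>K\<in>Y i. Wt \<sigma> K)) \<and>
       (\<forall>i<k. \<forall>i'<k. i \<noteq> i' \<longrightarrow> Y i \<inter> Y i' = {})"
proof -
  define M where "M = 1 + 1 / (2 * real k)"
  have M1: "1 \<le> M" unfolding M_def by simp
  have tot: "real (k - 1) * M + 1/2 \<le> (\<Sum>K\<in>ckey \<sigma> ` V'. Wt \<sigma> K)"
  proof -
    have rk: "real (k - 1) = real k - 1" using kpos by (simp add: of_nat_diff)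
    have "real (k - 1) * M + 1/2 = real k - 1/2 + (real k - 1) / (2 * real k)"
      unfolding M_def rk using kpos by (simp add: algebra_simps add_divide_distrib)
    also have "\<dots> \<le> real k" using kpos by (simp add: field_simps)
    finally have "real (k - 1) * M + 1/2 \<le> real k" .
    then show ?thesis by (subst Wt_sum)
  qed
  obtain Y where Y1: "\<forall>i\<le>k-1. Y i \<subseteq> ckey \<sigma> ` V' \<and> 1/2 \<le> sum (Wt \<sigma>) (Y i)"
    and Y2: "\<forall>i\<le>k-1. \<forall>i'\<le>k-1. i \<noteq> i' \<longrightarrow> Y i \<inter> Y i' = {}"
    using groups_aux[OF M1, where j="k - 1" and W="Wt \<sigma>"] fV' tot
    unfolding M_def using Wt_bound by (metis finite_imageI)
  have lk: "i < k \<longleftrightarrow> i \<le> k - 1" for i using kpos by auto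
  show ?thesis using Y1 Y2 unfolding lk by blast
qed

lemma aux_lin: "(a::real) + b \<le> c \<Longrightarrow> 0 \<le> c \<Longrightarrow> 2 * a + 2 * b \<le> 4 * c" by linarith

lemma sg_sq2: "(sg \<sigma> u * a)\<^sup>2 = a\<^sup>2" unfolding sg_def by simp

lemma D_eq:
  "(\<Sum>u\<in>V. deg V w u * (gfun \<sigma> Y u)\<^sup>2) = (\<Sum>K\<in>Y. Wt \<sigma> K)" if Ysub: "Y \<subseteq> ckey \<sigma> ` V'"
proof -
  have fY: "finite Y" using Ysub fV' by (metis finite_surj)
  have "(\<Sum>u\<in>V. deg V w u * (gfun \<sigma> Y u)\<^sup>2) = (\<Sum>u\<in>{u\<in>V'. ckey \<sigma> u \<in> Y}. mass u)"
  proof -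
    have "(\<Sum>u\<in>V. deg V w u * (gfun \<sigma> Y u)\<^sup>2) = (\<Sum>u\<in>{u\<in>V'. ckey \<sigma> u \<in> Y}. deg V w u * (gfun \<sigma> Y u)\<^sup>2)"
      using fV V'V by (intro sum.mono_neutral_right) (auto simp: gfun_def)
    also have "\<dots> = (\<Sum>u\<in>{u\<in>V'. ckey \<sigma> u \<in> Y}. mass u)"
      unfolding mass_def gfun_def by (intro sum.cong refl) (simp add: sg_sq2)
    finally show ?thesis .
  qed
  also have "\<dots> = (\<Sum>K\<in>Y. \<Sum>u\<in>{u\<in>{u\<in>V'. ckey \<sigma> u \<in> Y}. ckey \<sigma> u = K}. mass u)"
  proof -
    have fS: "finite {u\<in>V'. ckey \<sigma> u \<in> Y}" using fV' by auto
    have im: "ckey \<sigma> ` {u\<in>V'. ckey \<sigma> u \<in> Y} \<subseteq> Y" by auto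
    show ?thesis using sum.group[OF fS fY im, of mass] by simp
  qed
  also have "\<dots> = (\<Sum>K\<in>Y. Wt \<sigma> K)" unfolding Wt_def
    by (intro sum.cong refl arg_cong[where f="sum mass"]) auto
  finally show ?thesis .
qed

lemma same_class_g:
  assumes u: "u \<in> V'" and v: "v \<in> V'" and ck: "ckey \<sigma> u = ckey \<sigma> v"
  shows "\<bar>sg \<sigma> u * nF u + sg \<sigma> v * nF v\<bar> \<le> 2 * nS u v"
proof (cases "sg \<sigma> u = sg \<sigma> v")
  case True
  have sgv: "sg \<sigma> v = 1 \<or> sg \<sigma> v = -1" unfolding sg_def by simp
  have "1 - 1 / (8 * real k) \<le> ipk k (p \<sigma> u) (p \<sigma> v)" by (rule inner_close[OF u v ck])
  moreover have "1 / (8 * real k) \<le> 1" using kpos by simp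
  ultimately have "0 \<le> ipk k (p \<sigma> u) (p \<sigma> v)" by linarith
  then have ipx: "0 \<le> ipk k (x u) (x v)" unfolding ipk_p True using sgv by auto
  have ipF: "ipk k (F u) (F v) = nF u * nF v * ipk k (x u) (x v)"
    unfolding ipk_def F_def using F_eq[OF u] F_eq[OF v] by (simp add: sum_distrib_left mult_ac)
  have "0 \<le> ipk k (F u) (F v)" unfolding ipF using ipx nF_nonneg by simp
  moreover have "(nS u v)\<^sup>2 = (nF u)\<^sup>2 + (nF v)\<^sup>2 + 2 * ipk k (F u) (F v)"
    unfolding nS_def nF_def using nk_sum_sq[of k "F u" "F v"] by (simp add: F_def)
  ultimately have h: "(nF u)\<^sup>2 + (nF v)\<^sup>2 \<le> (nS u v)\<^sup>2" by simp
  have "2 * ((nF u)\<^sup>2 + (nF v)\<^sup>2) - (nF u + nF v)\<^sup>2 = (nF u - nF v)\<^sup>2"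
    by (simp add: power2_eq_square algebra_simps)
  then have "(nF u + nF v)\<^sup>2 \<le> 2 * ((nF u)\<^sup>2 + (nF v)\<^sup>2)"
    using zero_le_power2[of "nF u - nF v"] by linarith
  also have "\<dots> \<le> (2 * nS u v)\<^sup>2"
  proof -
    have "(2 * nS u v)\<^sup>2 = 4 * (nS u v)\<^sup>2" by (simp add: power2_eq_square)
    then show ?thesis using h zero_le_power2[of "nS u v"] by (simp add: power_mult_distrib) (metis aux_lin zero_le_power2)
  qed
  finally have sq: "(nF u + nF v)\<^sup>2 \<le> (2 * nS u v)\<^sup>2" .
  have "0 \<le> 2 * nS u v" unfolding nS_def using nk_nonneg by simp
  then have "nF u + nF v \<le> 2 * nS u v" using power2_le_imp_le[OF sq] by blast
  moreover have "\<bar>sg \<sigma> u * nF u + sg \<sigma> v * nF v\<bar> = nF u + nF v"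
    using True sgv nF_nonneg[of u] nF_nonneg[of v] by auto
  ultimately show ?thesis by simp
next
  case False
  then have "sg \<sigma> u = - sg \<sigma> v" unfolding sg_def by (auto split: if_splits)
  then have "\<bar>sg \<sigma> u * nF u + sg \<sigma> v * nF v\<bar> = \<bar>nF u - nF v\<bar>"
    unfolding sg_def by (auto split: if_splits simp: abs_minus_commute)
  also have "\<dots> \<le> nS u v" unfolding nS_def nF_def using nk_rev_tri[of k "F u" "F v"] by (simp add: F_def)
  also have "\<dots> \<le> 2 * nS u v" using nk_nonneg unfolding nS_def by simp
  finally show ?thesis .
qed

end




lemma weighted_CS:
  fixes w a b :: "'i \<Rightarrow> real"
  assumes "\<forall>p\<in>I. 0 \<le> w p"
  shows "(\<Sum>p\<in>I. w p * a p * b p)\<^sup>2 \<le> (\<Sum>p\<in>I. w p * (a p)\<^sup>2) * (\<Sum>p\<in>I. w p * (b p)\<^sup>2)"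
proof -
  define A where "A p = sqrt (w p) * a p" for p
  define B where "B p = sqrt (w p) * b p" for p
  have "\<bar>\<Sum>p\<in>I. w p * a p * b p\<bar> \<le> (\<Sum>p\<in>I. \<bar>A p\<bar> * \<bar>B p\<bar>)"
  proof -
    have "\<bar>\<Sum>p\<in>I. w p * a p * b p\<bar> \<le> (\<Sum>p\<in>I. \<bar>w p * a p * b p\<bar>)" by (rule sum_abs)
    also have "\<dots> = (\<Sum>p\<in>I. \<bar>A p\<bar> * \<bar>B p\<bar>)"
      unfolding A_def B_def using assms
      by (intro sum.cong refl) (simp add: abs_mult real_sqrt_abs2 mult_ac flip: real_sqrt_mult)
    finally show ?thesis .
  qed
  also have "\<dots> \<le> L2_set A I * L2_set B I" by (rule L2_set_mult_ineq)
  finally have h: "\<bar>\<Sum>p\<in>I. w p * a p * b p\<bar> \<le> L2_set A I * L2_set B I" .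
  have "(\<Sum>p\<in>I. w p * a p * b p)\<^sup>2 = \<bar>\<Sum>p\<in>I. w p * a p * b p\<bar>\<^sup>2" by simp
  also have "\<dots> \<le> (L2_set A I * L2_set B I)\<^sup>2" using h by (intro power_mono) auto
  also have "\<dots> = (\<Sum>p\<in>I. (A p)\<^sup>2) * (\<Sum>p\<in>I. (B p)\<^sup>2)"
    unfolding L2_set_def power_mult_distrib by (simp add: sum_nonneg)
  also have "\<dots> = (\<Sum>p\<in>I. w p * (a p)\<^sup>2) * (\<Sum>p\<in>I. w p * (b p)\<^sup>2)"
    unfolding A_def B_def power_mult_distrib using assms by simp
  finally show ?thesis .
qed

lemma aux_add: "(x::real) \<le> c \<Longrightarrow> 0 \<le> p \<Longrightarrow> x \<le> 2 * p + c" by linarith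

context thm_setup
begin

lemma g_abs: "\<bar>gfun \<sigma> Y u\<bar> \<le> nF u"
  unfolding gfun_def using sg_abs[of \<sigma> u] nF_nonneg[of u] by (auto simp: abs_mult)

lemma nS_nonneg: "0 \<le> nS u v" unfolding nS_def by (rule nk_nonneg)

lemma nS_zero_left: "u \<in> V \<Longrightarrow> u \<notin> V' \<Longrightarrow> nS u v = nF v"
  unfolding nS_def nF_def nk_def F_def using F_zero by (intro L2_set_cong) auto

lemma nS_comm: "nS u v = nS v u" unfolding nS_def by (simp add: add.commute)

lemma pair_bound:
  assumes u: "u \<in> V" and v: "v \<in> V"
  shows "\<bar>gfun \<sigma> Y u + gfun \<sigma> Y v\<bar> * (\<bar>gfun \<sigma> Y u\<bar> + \<bar>gfun \<sigma> Y v\<bar>)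
      \<le> 2 * (nS u v * (nF u + nF v)) + 2 * sepw \<sigma> u v"
proof -
  let ?g = "gfun \<sigma> Y"
  have gu: "\<bar>?g u\<bar> \<le> nF u" and gv: "\<bar>?g v\<bar> \<le> nF v" by (rule g_abs)+
  have sepnn: "0 \<le> sepw \<sigma> u v" unfolding sepw_def by auto
  have Pnn: "0 \<le> nS u v * (nF u + nF v)" using nS_nonneg nF_nonneg by (simp add: add_nonneg_nonneg)
  have tri: "\<bar>?g u + ?g v\<bar> \<le> \<bar>?g u\<bar> + \<bar>?g v\<bar>" by (rule abs_triangle_ineq)
  show ?thesis
  proof (cases "u \<in> V'")
    case False
    then have g0: "?g u = 0" unfolding gfun_def by simp
    have "nS u v = nF v" using nS_zero_left[OF u False] .
    moreover have "nF u = 0" using False u unfolding V'_def by simp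
    ultimately have "\<bar>?g u + ?g v\<bar> * (\<bar>?g u\<bar> + \<bar>?g v\<bar>) \<le> nS u v * (nF u + nF v)"
    proof -
      have "\<bar>?g v\<bar> * \<bar>?g v\<bar> \<le> nF v * nF v" using gv nF_nonneg[of v] by (intro mult_mono) auto
      then show ?thesis using g0 \<open>nS u v = nF v\<close> \<open>nF u = 0\<close> by simp
    qed
    then show ?thesis using Pnn sepnn by linarith
  next
    case uV': True
    show ?thesis
    proof (cases "v \<in> V'")
      case False
      then have g0: "?g v = 0" unfolding gfun_def by simp
      have "nS u v = nF u" using nS_zero_left[OF v False] nS_comm by simp
      moreover have "nF v = 0" using False v unfolding V'_def by simp
      ultimately have "\<bar>?g u + ?g v\<bar> * (\<bar>?g u\<bar> + \<bar>?g v\<bar>) \<le> nS u v * (nF u + nF v)"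
      proof -
        have "\<bar>?g u\<bar> * \<bar>?g u\<bar> \<le> nF u * nF u" using gu nF_nonneg[of u] by (intro mult_mono) auto
        then show ?thesis using g0 \<open>nS u v = nF u\<close> \<open>nF v = 0\<close> by simp
      qed
      then show ?thesis using Pnn sepnn by linarith
    next
      case vV': True
      show ?thesis
      proof (cases "ckey \<sigma> u = ckey \<sigma> v")
        case False
        then have sep: "sepw \<sigma> u v = (nF u)\<^sup>2 + (nF v)\<^sup>2" unfolding sepw_def using uV' vV' by simp
        have s1: "\<bar>?g u\<bar> + \<bar>?g v\<bar> \<le> nF u + nF v" using gu gv by simp
        have "\<bar>?g u + ?g v\<bar> * (\<bar>?g u\<bar> + \<bar>?g v\<bar>) \<le> (nF u + nF v) * (nF u + nF v)"
          using tri s1 by (intro mult_mono) auto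
        also have "\<dots> \<le> 2 * ((nF u)\<^sup>2 + (nF v)\<^sup>2)"
        proof -
          have "2 * ((nF u)\<^sup>2 + (nF v)\<^sup>2) - (nF u + nF v) * (nF u + nF v) = (nF u - nF v)\<^sup>2"
            by (simp add: power2_eq_square algebra_simps)
          then show ?thesis using zero_le_power2[of "nF u - nF v"] by linarith
        qed
        finally have "\<bar>?g u + ?g v\<bar> * (\<bar>?g u\<bar> + \<bar>?g v\<bar>) \<le> 2 * sepw \<sigma> u v" unfolding sep .
        then show ?thesis using Pnn by (metis aux_add)
      next
        case True
        show ?thesis
        proof (cases "ckey \<sigma> u \<in> Y")
          case False
          then have "?g u = 0" "?g v = 0" unfolding gfun_def using True by auto
          then show ?thesis using Pnn sepnn by simp
        next
          case inY: True
          then have gu': "?g u = sg \<sigma> u * nF u" and gv': "?g v = sg \<sigma> v * nF v"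
            unfolding gfun_def using True uV' vV' by auto
          have a1: "\<bar>?g u + ?g v\<bar> \<le> 2 * nS u v" unfolding gu' gv' by (rule same_class_g[OF uV' vV' True])
          have a2: "\<bar>?g u\<bar> + \<bar>?g v\<bar> \<le> nF u + nF v" using gu gv by simp
          have "\<bar>?g u + ?g v\<bar> * (\<bar>?g u\<bar> + \<bar>?g v\<bar>) \<le> (2 * nS u v) * (nF u + nF v)"
            using a1 a2 by (intro mult_mono) auto
          then show ?thesis using sepnn by simp
        qed
      qed
    qed
  qed
qed

definition PP where "PP = (\<Sum>u\<in>V. \<Sum>v\<in>V. w u v * (nS u v * (nF u + nF v)))"
definition XX where "XX \<sigma> = (\<Sum>u\<in>V. \<Sum>v\<in>V. w u v * sepw \<sigma> u v)"
definition Num where "Num \<sigma> Y = (\<Sum>u\<in>V. \<Sum>v\<in>V. w u v * (\<bar>gfun \<sigma> Y u + gfun \<sigma> Y v\<bar> * (\<bar>gfun \<sigma> Y u\<bar> + \<bar>gfun \<sigma> Y v\<bar>)))"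

lemma Num_bound: "Num \<sigma> Y \<le> 2 * PP + 2 * XX \<sigma>"
proof -
  have "Num \<sigma> Y \<le> (\<Sum>u\<in>V. \<Sum>v\<in>V. w u v * (2 * (nS u v * (nF u + nF v)) + 2 * sepw \<sigma> u v))"
    unfolding Num_def using wnn pair_bound by (intro sum_mono mult_left_mono) auto
  also have "\<dots> = 2 * PP + 2 * XX \<sigma>" unfolding PP_def XX_def
    by (simp add: sum.distrib sum_distrib_left algebra_simps)
  finally show ?thesis .
qed

lemma Num_nonneg: "0 \<le> Num \<sigma> Y"
  unfolding Num_def using wnn by (intro sum_nonneg mult_nonneg_nonneg) auto

lemma PP_nonneg: "0 \<le> PP"
  unfolding PP_def using wnn nS_nonneg nF_nonneg by (intro sum_nonneg mult_nonneg_nonneg add_nonneg_nonneg) auto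

definition NN where "NN = (1/2) * (\<Sum>u\<in>V. \<Sum>v\<in>V. (\<Sum>i<k. (f i u + f i v)\<^sup>2) * w u v)"

lemma rayleigh_eq: "rayleigh_bar V w k f = NN / real k"
  unfolding rayleigh_bar_def NN_def using total_mass unfolding nF_sq by (simp add: mult.commute)

lemma PP_sq: "PP\<^sup>2 \<le> 8 * real k * NN"
proof -
  let ?I = "V \<times> V"
  have fI: "finite ?I" using fV by simp
  have wI: "\<forall>q\<in>?I. 0 \<le> (case q of (u, v) \<Rightarrow> w u v)" using wnn by auto
  have e1: "PP = (\<Sum>q\<in>?I. (case q of (u, v) \<Rightarrow> w u v) * (case q of (u, v) \<Rightarrow> nS u v) * (case q of (u, v) \<Rightarrow> nF u + nF v))"
    unfolding PP_def sum.cartesian_product by (intro sum.cong refl) (auto simp: mult.assoc)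
  have "PP\<^sup>2 \<le> (\<Sum>q\<in>?I. (case q of (u, v) \<Rightarrow> w u v) * (case q of (u, v) \<Rightarrow> nS u v)\<^sup>2)
         * (\<Sum>q\<in>?I. (case q of (u, v) \<Rightarrow> w u v) * (case q of (u, v) \<Rightarrow> nF u + nF v)\<^sup>2)"
    unfolding e1 by (rule weighted_CS[OF wI])
  also have "\<dots> = (\<Sum>u\<in>V. \<Sum>v\<in>V. w u v * (nS u v)\<^sup>2) * (\<Sum>u\<in>V. \<Sum>v\<in>V. w u v * (nF u + nF v)\<^sup>2)"
    by (simp add: sum.cartesian_product case_prod_beta)
  also have "\<dots> \<le> (2 * NN) * (4 * real k)"
  proof (rule mult_mono)
    show "(\<Sum>u\<in>V. \<Sum>v\<in>V. w u v * (nS u v)\<^sup>2) \<le> 2 * NN"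
      unfolding NN_def nS_def nk_sq by (simp add: mult.commute)
    have "(\<Sum>u\<in>V. \<Sum>v\<in>V. w u v * (nF u + nF v)\<^sup>2) \<le> (\<Sum>u\<in>V. \<Sum>v\<in>V. 2 * (w u v * (nF u)\<^sup>2) + 2 * (w u v * (nF v)\<^sup>2))"
    proof (intro sum_mono)
      fix u v assume "u \<in> V" "v \<in> V"
      then have w0: "0 \<le> w u v" using wnn by auto
      have "(nF u + nF v)\<^sup>2 \<le> 2 * (nF u)\<^sup>2 + 2 * (nF v)\<^sup>2"
      proof -
        have "2 * (nF u)\<^sup>2 + 2 * (nF v)\<^sup>2 - (nF u + nF v)\<^sup>2 = (nF u - nF v)\<^sup>2"
          by (simp add: power2_eq_square algebra_simps)
        then show ?thesis using zero_le_power2[of "nF u - nF v"] by linarith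
      qed
      then have "w u v * (nF u + nF v)\<^sup>2 \<le> w u v * (2 * (nF u)\<^sup>2 + 2 * (nF v)\<^sup>2)"
        using w0 by (rule mult_left_mono)
      then show "w u v * (nF u + nF v)\<^sup>2 \<le> 2 * (w u v * (nF u)\<^sup>2) + 2 * (w u v * (nF v)\<^sup>2)"
        by (simp add: algebra_simps)
    qed
    also have "\<dots> = 2 * (\<Sum>u\<in>V. \<Sum>v\<in>V. w u v * (nF u)\<^sup>2) + 2 * (\<Sum>u\<in>V. \<Sum>v\<in>V. w u v * (nF v)\<^sup>2)"
      by (simp add: sum.distrib sum_distrib_left)
    also have "(\<Sum>u\<in>V. \<Sum>v\<in>V. w u v * (nF v)\<^sup>2) = (\<Sum>u\<in>V. \<Sum>v\<in>V. w u v * (nF u)\<^sup>2)"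
      using swap_sym[OF sym, of "\<lambda>u v. (nF u)\<^sup>2"] by simp
    also have "(\<Sum>u\<in>V. \<Sum>v\<in>V. w u v * (nF u)\<^sup>2) = real k"
      using total_mass unfolding deg_def by (simp add: sum_distrib_right)
    finally show "(\<Sum>u\<in>V. \<Sum>v\<in>V. w u v * (nF u + nF v)\<^sup>2) \<le> 4 * real k" by simp
    show "0 \<le> 2 * NN" unfolding NN_def using wnn
      by (intro mult_nonneg_nonneg sum_nonneg) auto
    show "0 \<le> (\<Sum>u\<in>V. \<Sum>v\<in>V. w u v * (nF u + nF v)\<^sup>2)" using wnn
      by (intro sum_nonneg mult_nonneg_nonneg) auto
  qed
  finally show ?thesis by (simp add: mult_ac)
qed

end




context thm_setup
begin

definition Aj where "Aj j q = (case q of ((u, v), b) \<Rightarrow> if b then x u j else - x u j)"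
definition Bj where "Bj j q = (case q of ((u, v), b) \<Rightarrow> if b then - x v j else x v j)"
definition om where "om q = (case q of (u, v) \<Rightarrow> w u v * ((nF u)\<^sup>2 + (nF v)\<^sup>2))"
definition ind where "ind \<sigma> j q = (of_bool (\<lfloor>(Aj j q - \<sigma> j) / s\<rfloor> \<noteq> \<lfloor>(Bj j q - \<sigma> j) / s\<rfloor>) :: real)"

lemma sep_witness:
  assumes "u \<in> V'" "v \<in> V'" "ckey \<sigma> u \<noteq> ckey \<sigma> v"
  shows "\<exists>j<k. \<exists>b. ind \<sigma> j ((u, v), b) = 1"
proof (rule ccontr)
  assume "\<not> ?thesis"
  then have h: "\<forall>j<k. \<forall>b. \<lfloor>(Aj j ((u, v), b) - \<sigma> j) / s\<rfloor> = \<lfloor>(Bj j ((u, v), b) - \<sigma> j) / s\<rfloor>"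
    unfolding ind_def by auto
  have c1: "cc \<sigma> (x u) = cc \<sigma> (\<lambda>j. - x v j)"
  proof
    fix j show "cc \<sigma> (x u) j = cc \<sigma> (\<lambda>j. - x v j) j"
      using h[rule_format, of j True] unfolding cc_def Aj_def Bj_def by auto
  qed
  have c2: "cc \<sigma> (\<lambda>j. - x u j) = cc \<sigma> (x v)"
  proof
    fix j show "cc \<sigma> (\<lambda>j. - x u j) j = cc \<sigma> (x v) j"
      using h[rule_format, of j False] unfolding cc_def Aj_def Bj_def by auto
  qed
  have "kap \<sigma> (x u) = prod.swap (kap \<sigma> (x v))" unfolding kap_def using c1 c2 by simp
  then have "ckey \<sigma> u = ckey \<sigma> v" unfolding ckey_def by auto
  then show False using assms(3) by simp
qed

definition indsum where "indsum \<sigma> u v = (\<Sum>j<k. \<Sum>b\<in>UNIV. ind \<sigma> j ((u, v), b))"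

lemma ind_nonneg: "0 \<le> ind \<sigma> j q" unfolding ind_def by simp

lemma sepw_le: "sepw \<sigma> u v \<le> (if u \<in> V' \<and> v \<in> V' then ((nF u)\<^sup>2 + (nF v)\<^sup>2) * indsum \<sigma> u v else 0)"
proof (cases "u \<in> V' \<and> v \<in> V' \<and> ckey \<sigma> u \<noteq> ckey \<sigma> v")
  case True
  then obtain j b where jb: "j < k" "ind \<sigma> j ((u, v), b) = 1" using sep_witness by blast
  have "1 \<le> (\<Sum>b\<in>UNIV. ind \<sigma> j ((u, v), b))"
    using jb(2) ind_nonneg[of \<sigma> j] by (intro member_le_sum[where i=b, THEN order_trans[rotated]]) (auto simp: jb(2))
  also have "\<dots> \<le> indsum \<sigma> u v" unfolding indsum_def using jb(1) ind_nonneg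
    by (intro member_le_sum[where i=j]) (auto intro: sum_nonneg)
  finally have "1 \<le> indsum \<sigma> u v" .
  then have "((nF u)\<^sup>2 + (nF v)\<^sup>2) * 1 \<le> ((nF u)\<^sup>2 + (nF v)\<^sup>2) * indsum \<sigma> u v"
    by (intro mult_left_mono) auto
  then show ?thesis unfolding sepw_def using True by simp
next
  case False
  have "0 \<le> indsum \<sigma> u v" unfolding indsum_def using ind_nonneg by (intro sum_nonneg) auto
  then show ?thesis unfolding sepw_def using False by auto
qed

lemma cart_bool: "(\<Sum>q\<in>(V' \<times> V') \<times> UNIV. h q) = (\<Sum>q\<in>V' \<times> V'. \<Sum>b\<in>UNIV. h (q, b))"
  unfolding sum.cartesian_product by simp

definition Phi where "Phi \<sigma> j = (\<Sum>q\<in>(V' \<times> V') \<times> UNIV. om (fst q) * ind \<sigma> j q)"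

lemma XX_le_Phi: "XX \<sigma> \<le> (\<Sum>j<k. Phi \<sigma> j)"
proof -
  have "XX \<sigma> \<le> (\<Sum>u\<in>V. \<Sum>v\<in>V. w u v * (if u \<in> V' \<and> v \<in> V' then ((nF u)\<^sup>2 + (nF v)\<^sup>2) * indsum \<sigma> u v else 0))"
    unfolding XX_def using wnn sepw_le by (intro sum_mono mult_left_mono) auto
  also have "\<dots> = (\<Sum>u\<in>V'. \<Sum>v\<in>V'. w u v * (((nF u)\<^sup>2 + (nF v)\<^sup>2) * indsum \<sigma> u v))"
  proof -
    have "(\<Sum>u\<in>V. \<Sum>v\<in>V. w u v * (if u \<in> V' \<and> v \<in> V' then ((nF u)\<^sup>2 + (nF v)\<^sup>2) * indsum \<sigma> u v else 0))
        = (\<Sum>u\<in>V'. \<Sum>v\<in>V. w u v * (if u \<in> V' \<and> v \<in> V' then ((nF u)\<^sup>2 + (nF v)\<^sup>2) * indsum \<sigma> u v else 0))"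
      using fV V'V by (intro sum.mono_neutral_right) auto
    also have "\<dots> = (\<Sum>u\<in>V'. \<Sum>v\<in>V'. w u v * (if u \<in> V' \<and> v \<in> V' then ((nF u)\<^sup>2 + (nF v)\<^sup>2) * indsum \<sigma> u v else 0))"
      using fV V'V by (intro sum.cong refl sum.mono_neutral_right) auto
    also have "\<dots> = (\<Sum>u\<in>V'. \<Sum>v\<in>V'. w u v * (((nF u)\<^sup>2 + (nF v)\<^sup>2) * indsum \<sigma> u v))"
      by (intro sum.cong refl) auto
    finally show ?thesis .
  qed
  also have "\<dots> = (\<Sum>q\<in>V' \<times> V'. om q * indsum \<sigma> (fst q) (snd q))"
    unfolding sum.cartesian_product om_def by (intro sum.cong refl) (auto simp: mult.assoc)
  also have "\<dots> = (\<Sum>q\<in>V' \<times> V'. \<Sum>j<k. \<Sum>b\<in>UNIV. om q * ind \<sigma> j (q, b))"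
    unfolding indsum_def by (simp add: sum_distrib_left)
  also have "\<dots> = (\<Sum>j<k. \<Sum>q\<in>V' \<times> V'. \<Sum>b\<in>UNIV. om q * ind \<sigma> j (q, b))"
    by (rule sum.swap)
  also have "\<dots> = (\<Sum>j<k. Phi \<sigma> j)"
    using cart_bool[of "\<lambda>q. om (fst q) * ind \<sigma> _ q"] unfolding Phi_def by simp
  finally show ?thesis .
qed

lemma om_nonneg: "q \<in> V' \<times> V' \<Longrightarrow> 0 \<le> om q"
  unfolding om_def using wnn V'V by (auto intro!: mult_nonneg_nonneg add_nonneg_nonneg)

lemma Phi_choice:
  "\<exists>t. (\<Sum>q\<in>(V' \<times> V') \<times> UNIV. om (fst q) * of_bool (\<lfloor>(Aj j q - t) / s\<rfloor> \<noteq> \<lfloor>(Bj j q - t) / s\<rfloor>))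
      \<le> 2 / s * (\<Sum>q\<in>(V' \<times> V') \<times> UNIV. om (fst q) * \<bar>Aj j q - Bj j q\<bar>)"
  by (rule shift_exists) (use fV' om_nonneg s_pos in auto)

lemma AB_diff: "\<bar>Aj j ((u, v), b) - Bj j ((u, v), b)\<bar> = \<bar>x u j + x v j\<bar>"
proof (cases b)
  case True
  then show ?thesis unfolding Aj_def Bj_def by simp
next
  case False
  have "- x u j - x v j = - (x u j + x v j)" by simp
  then have "\<bar>- x u j - x v j\<bar> = \<bar>x u j + x v j\<bar>" by (simp only: abs_minus_cancel)
  then show ?thesis using False unfolding Aj_def Bj_def by simp
qed

lemma sigma_exists: "\<exists>\<sigma>. \<forall>j. Phi \<sigma> j \<le> 4 / s * (\<Sum>q\<in>V' \<times> V'. om q * \<bar>x (fst q) j + x (snd q) j\<bar>)"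
proof -
  have "\<forall>j. \<exists>t. (\<Sum>q\<in>(V' \<times> V') \<times> UNIV. om (fst q) * of_bool (\<lfloor>(Aj j q - t) / s\<rfloor> \<noteq> \<lfloor>(Bj j q - t) / s\<rfloor>))
      \<le> 2 / s * (\<Sum>q\<in>(V' \<times> V') \<times> UNIV. om (fst q) * \<bar>Aj j q - Bj j q\<bar>)"
    using Phi_choice by blast
  then have "\<exists>\<sigma>. \<forall>j. (\<Sum>q\<in>(V' \<times> V') \<times> UNIV. om (fst q) * of_bool (\<lfloor>(Aj j q - \<sigma> j) / s\<rfloor> \<noteq> \<lfloor>(Bj j q - \<sigma> j) / s\<rfloor>))
      \<le> 2 / s * (\<Sum>q\<in>(V' \<times> V') \<times> UNIV. om (fst q) * \<bar>Aj j q - Bj j q\<bar>)"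
    by (rule choice)
  then obtain \<sigma> where hs: "\<forall>j. (\<Sum>q\<in>(V' \<times> V') \<times> UNIV. om (fst q) * of_bool (\<lfloor>(Aj j q - \<sigma> j) / s\<rfloor> \<noteq> \<lfloor>(Bj j q - \<sigma> j) / s\<rfloor>))
      \<le> 2 / s * (\<Sum>q\<in>(V' \<times> V') \<times> UNIV. om (fst q) * \<bar>Aj j q - Bj j q\<bar>)"
    by (elim exE)
  have "Phi \<sigma> j \<le> 4 / s * (\<Sum>q\<in>V' \<times> V'. om q * \<bar>x (fst q) j + x (snd q) j\<bar>)" for j
  proof -
    have "(\<Sum>q\<in>(V' \<times> V') \<times> UNIV. om (fst q) * \<bar>Aj j q - Bj j q\<bar>)
        = (\<Sum>q\<in>V' \<times> V'. \<Sum>b\<in>UNIV. om q * \<bar>Aj j (q, b) - Bj j (q, b)\<bar>)"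
      by (simp only: cart_bool fst_conv)
    also have "\<dots> = (\<Sum>q\<in>V' \<times> V'. 2 * (om q * \<bar>x (fst q) j + x (snd q) j\<bar>))"
      by (intro sum.cong refl) (auto simp: UNIV_bool AB_diff)
    also have "\<dots> = 2 * (\<Sum>q\<in>V' \<times> V'. om q * \<bar>x (fst q) j + x (snd q) j\<bar>)"
      by (simp add: sum_distrib_left)
    finally have e: "(\<Sum>q\<in>(V' \<times> V') \<times> UNIV. om (fst q) * \<bar>Aj j q - Bj j q\<bar>)
        = 2 * (\<Sum>q\<in>V' \<times> V'. om q * \<bar>x (fst q) j + x (snd q) j\<bar>)" .
    show ?thesis using hs[rule_format, of j] unfolding Phi_def ind_def e by simp
  qed
  then show ?thesis by blast
qed

lemma geom_uv:
  assumes "u \<in> V'" "v \<in> V'"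
  shows "((nF u)\<^sup>2 + (nF v)\<^sup>2) * nk k (\<lambda>j. x u j + x v j) \<le> 2 * nS u v * (nF u + nF v)"
proof -
  have nu: "nk k (F u) \<noteq> 0" and nv: "nk k (F v) \<noteq> 0" using assms unfolding V'_def nF_def by auto
  have xs: "(\<lambda>j. x u j + x v j) = (\<lambda>i. F u i / nF u + F v i / nF v)"
    unfolding x_def F_def by simp
  have xs': "(\<lambda>j. x v j + x u j) = (\<lambda>i. F v i / nF v + F u i / nF u)"
    unfolding x_def F_def by simp
  have eqS: "nk k (\<lambda>i. F u i + F v i) = nS u v" unfolding nS_def F_def by simp
  have eqS': "nk k (\<lambda>i. F v i + F u i) = nS u v" unfolding nS_def F_def by (simp add: add.commute)
  have g1: "nk k (\<lambda>j. x u j + x v j) * nF v \<le> 2 * nS u v"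
    using geom[OF nu nv] unfolding xs[symmetric] eqS nF_def[symmetric] .
  have g2: "nk k (\<lambda>j. x u j + x v j) * nF u \<le> 2 * nS u v"
  proof -
    have "nk k (\<lambda>j. x v j + x u j) * nF u \<le> 2 * nS u v"
      using geom[OF nv nu] unfolding xs'[symmetric] eqS' nF_def[symmetric] .
    moreover have "(\<lambda>j. x v j + x u j) = (\<lambda>j. x u j + x v j)" by (simp add: add.commute)
    ultimately show ?thesis by simp
  qed
  have "(nF u)\<^sup>2 * nk k (\<lambda>j. x u j + x v j) \<le> nF u * (2 * nS u v)"
    using mult_left_mono[OF g2 nF_nonneg[of u]] by (simp add: power2_eq_square mult_ac)
  moreover have "(nF v)\<^sup>2 * nk k (\<lambda>j. x u j + x v j) \<le> nF v * (2 * nS u v)"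
    using mult_left_mono[OF g1 nF_nonneg[of v]] by (simp add: power2_eq_square mult_ac)
  ultimately show ?thesis by (simp add: algebra_simps)
qed

lemma XX_bound: "\<exists>\<sigma>. XX \<sigma> \<le> 8 * sqrt (real k) / s * PP"
proof -
  obtain \<sigma> where hs: "\<forall>j. Phi \<sigma> j \<le> 4 / s * (\<Sum>q\<in>V' \<times> V'. om q * \<bar>x (fst q) j + x (snd q) j\<bar>)"
    using sigma_exists by blast
  have "XX \<sigma> \<le> (\<Sum>j<k. Phi \<sigma> j)" by (rule XX_le_Phi)
  also have "\<dots> \<le> (\<Sum>j<k. 4 / s * (\<Sum>q\<in>V' \<times> V'. om q * \<bar>x (fst q) j + x (snd q) j\<bar>))"
    using hs by (intro sum_mono) auto
  also have "\<dots> = 4 / s * (\<Sum>q\<in>V' \<times> V'. om q * (\<Sum>j<k. \<bar>x (fst q) j + x (snd q) j\<bar>))"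
    by (simp add: sum_distrib_left sum.swap[of _ "{..<k}"] mult_ac)
  also have "\<dots> \<le> 4 / s * (\<Sum>q\<in>V' \<times> V'. om q * (sqrt (real k) * nk k (\<lambda>j. x (fst q) j + x (snd q) j)))"
    using s_pos om_nonneg sum_abs_le_sqrt by (intro mult_left_mono sum_mono) auto
  also have "\<dots> \<le> 4 / s * (\<Sum>q\<in>V' \<times> V'. sqrt (real k) * (case q of (u, v) \<Rightarrow> w u v * (2 * nS u v * (nF u + nF v))))"
  proof (intro mult_left_mono sum_mono)
    fix q assume q: "q \<in> V' \<times> V'"
    then obtain u v where uv: "q = (u, v)" "u \<in> V'" "v \<in> V'" by auto
    have w0: "0 \<le> w u v" using wnn uv V'V by auto
    have "om q * (sqrt (real k) * nk k (\<lambda>j. x (fst q) j + x (snd q) j))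
        = sqrt (real k) * (w u v * (((nF u)\<^sup>2 + (nF v)\<^sup>2) * nk k (\<lambda>j. x u j + x v j)))"
      unfolding uv om_def by (simp add: mult_ac)
    also have "\<dots> \<le> sqrt (real k) * (w u v * (2 * nS u v * (nF u + nF v)))"
      using geom_uv[OF uv(2,3)] w0 by (intro mult_left_mono) auto
    finally show "om q * (sqrt (real k) * nk k (\<lambda>j. x (fst q) j + x (snd q) j))
        \<le> sqrt (real k) * (case q of (u, v) \<Rightarrow> w u v * (2 * nS u v * (nF u + nF v)))"
      unfolding uv by simp
  qed (use s_pos in auto)
  also have "\<dots> = 8 * sqrt (real k) / s * (\<Sum>q\<in>V' \<times> V'. case q of (u, v) \<Rightarrow> w u v * (nS u v * (nF u + nF v)))"
  proof -
    have "(\<Sum>q\<in>V' \<times> V'. sqrt (real k) * (case q of (u, v) \<Rightarrow> w u v * (2 * nS u v * (nF u + nF v))))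
       = 2 * sqrt (real k) * (\<Sum>q\<in>V' \<times> V'. case q of (u, v) \<Rightarrow> w u v * (nS u v * (nF u + nF v)))"
      unfolding sum_distrib_left by (intro sum.cong refl) (auto simp: mult_ac)
    then show ?thesis by simp
  qed
  also have "\<dots> \<le> 8 * sqrt (real k) / s * PP"
  proof (intro mult_left_mono)
    have "(\<Sum>q\<in>V' \<times> V'. case q of (u, v) \<Rightarrow> w u v * (nS u v * (nF u + nF v)))
       \<le> (\<Sum>q\<in>V \<times> V. case q of (u, v) \<Rightarrow> w u v * (nS u v * (nF u + nF v)))"
      using fV V'V wnn nS_nonneg nF_nonneg
      by (intro sum_mono2) (auto intro!: mult_nonneg_nonneg add_nonneg_nonneg)
    then show "(\<Sum>q\<in>V' \<times> V'. case q of (u, v) \<Rightarrow> w u v * (nS u v * (nF u + nF v))) \<le> PP"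
      unfolding PP_def sum.cartesian_product by simp
  qed (use s_pos in auto)
  finally show ?thesis by blast
qed

end




lemma beta_ineqs:
  fixes b :: real
  assumes "0 \<le> b" "b \<le> 1"
  shows "b\<^sup>2 / 2 \<le> 1 - sqrt (1 - b\<^sup>2)" "1 - sqrt (1 - b\<^sup>2) \<le> b\<^sup>2"
proof -
  have b2: "0 \<le> b\<^sup>2" "b\<^sup>2 \<le> 1" using assms by (auto simp: power_le_one)
  have "sqrt (1 - b\<^sup>2) \<le> 1 - b\<^sup>2 / 2"
  proof (rule real_le_lsqrt)
    show "0 \<le> 1 - b\<^sup>2 / 2" using b2 by simp
    have "(1 - b\<^sup>2 / 2)\<^sup>2 = 1 - b\<^sup>2 + (b\<^sup>2)\<^sup>2 / 4" by (simp add: power2_eq_square algebra_simps)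
    then show "1 - b\<^sup>2 \<le> (1 - b\<^sup>2 / 2)\<^sup>2" by simp
  qed
  then show "b\<^sup>2 / 2 \<le> 1 - sqrt (1 - b\<^sup>2)" by simp
  have "1 - b\<^sup>2 \<le> sqrt (1 - b\<^sup>2)"
  proof (rule real_le_rsqrt)
    have "(1 - b\<^sup>2)\<^sup>2 = (1 - b\<^sup>2) * (1 - b\<^sup>2)" by (simp add: power2_eq_square)
    also have "\<dots> \<le> 1 * (1 - b\<^sup>2)" using b2 by (intro mult_right_mono) auto
    finally show "(1 - b\<^sup>2)\<^sup>2 \<le> 1 - b\<^sup>2" by simp
  qed
  then show "1 - sqrt (1 - b\<^sup>2) \<le> b\<^sup>2" by simp
qed

lemma phibar_facts:
  assumes wg: "weighted_graph V w" and AV: "A \<subseteq> V" and BV: "B \<subseteq> V" and dis: "A \<inter> B = {}"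
    and ne: "A \<union> B \<noteq> {}"
  shows "0 \<le> 1 - phibar V w A B" "1 - phibar V w A B \<le> 1"
    "vol V w (A \<union> B) - 2 * cut_weight w A B \<le> r * vol V w (A \<union> B) \<Longrightarrow> 1 - phibar V w A B \<le> r"
proof -
  have fV: "finite V" and sym: "\<forall>u\<in>V. \<forall>v\<in>V. w u v = w v u" and wnn: "\<forall>u\<in>V. \<forall>v\<in>V. 0 \<le> w u v"
    and degpos: "\<forall>u\<in>V. 0 < deg V w u"
    using wg unfolding weighted_graph_def by auto
  have fA: "finite A" and fB: "finite B" using AV BV fV finite_subset by auto
  have volpos: "0 < vol V w (A \<union> B)"
  proof -
    obtain u where "u \<in> A \<union> B" using ne by auto
    then show ?thesis unfolding vol_def using AV BV degpos fA fB
      by (intro sum_pos2[where i=u]) (auto intro: less_imp_le)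
  qed
  have cut_nn: "0 \<le> cut_weight w A B" unfolding cut_weight_def using AV BV wnn
    by (intro sum_nonneg) auto
  have cAB: "cut_weight w A B \<le> vol V w A" unfolding cut_weight_def vol_def deg_def
    using AV BV wnn fV by (intro sum_mono sum_mono2) auto
  have cBA: "cut_weight w B A \<le> vol V w B" unfolding cut_weight_def vol_def deg_def
    using AV BV wnn fV by (intro sum_mono sum_mono2) auto
  have csym: "cut_weight w A B = cut_weight w B A" by (rule cut_sym[OF fV AV BV sym])
  have vsplit: "vol V w (A \<union> B) = vol V w A + vol V w B" unfolding vol_def
    using fA fB dis by (rule sum.union_disjoint)
  have eq: "1 - phibar V w A B = (vol V w (A \<union> B) - 2 * cut_weight w A B) / vol V w (A \<union> B)"
    unfolding phibar_def using volpos by (simp add: field_simps)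
  show "0 \<le> 1 - phibar V w A B" unfolding eq using volpos cAB cBA csym vsplit by simp
  show "1 - phibar V w A B \<le> 1" unfolding eq using volpos cut_nn by simp
  assume "vol V w (A \<union> B) - 2 * cut_weight w A B \<le> r * vol V w (A \<union> B)"
  then show "1 - phibar V w A B \<le> r" unfolding eq using volpos by (simp add: divide_le_eq)
qed




lemma aux_9248: "(a::real) \<le> b \<Longrightarrow> 0 \<le> a \<Longrightarrow> 9248 * a \<le> 10000 * b" by linarith

context thm_setup
begin

lemma NN_nonneg: "0 \<le> NN"
  unfolding NN_def using wnn by (intro mult_nonneg_nonneg sum_nonneg) auto

lemma gfun_supp: "gfun \<sigma> Y u \<noteq> 0 \<Longrightarrow> u \<in> V' \<and> ckey \<sigma> u \<in> Y"
  unfolding gfun_def by (auto split: if_splits)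

lemma beta_sq_bound:
  assumes D: "1/2 \<le> Dv" and bnn: "0 \<le> b" and br: "b \<le> Num \<sigma> Y / (2 * Dv)"
    and XXb: "XX \<sigma> \<le> 8 * sqrt (real k) / s * PP"
  shows "b\<^sup>2 \<le> 10000 * real k ^ 6 * rayleigh_bar V w k f"
proof -
  have Nn: "0 \<le> Num \<sigma> Y" by (rule Num_nonneg)
  have "Num \<sigma> Y / (2 * Dv) \<le> Num \<sigma> Y"
  proof -
    have "1 \<le> 2 * Dv" using D by simp
    then show ?thesis using Nn by (simp add: divide_le_eq mult_le_cancel_left1)
  qed
  then have b1: "b \<le> Num \<sigma> Y" using br by linarith
  have sk: "8 * sqrt (real k) / s = 16 * real k * sqrt (real k)" unfolding s_def by simp
  have sq1: "1 \<le> sqrt (real k)" using kpos by simp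
  have k1: "1 \<le> real k" using kpos by simp
  have kk: "1 \<le> real k * sqrt (real k)" using mult_mono[OF k1 sq1] by simp
  have "Num \<sigma> Y \<le> 2 * PP + 2 * XX \<sigma>" by (rule Num_bound)
  also have "\<dots> \<le> 2 * PP + 2 * (16 * real k * sqrt (real k) * PP)" using XXb sk by simp
  also have "\<dots> \<le> 34 * (real k * sqrt (real k)) * PP"
  proof -
    have "2 * PP \<le> 2 * (real k * sqrt (real k)) * PP" using kk PP_nonneg
      by (simp add: mult_right_mono)
    then show ?thesis by (simp add: algebra_simps)
  qed
  finally have b2: "b \<le> 34 * (real k * sqrt (real k)) * PP" using b1 by linarith
  have "b\<^sup>2 \<le> (34 * (real k * sqrt (real k)) * PP)\<^sup>2" using b2 bnn by (intro power_mono) auto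
  also have "\<dots> = 1156 * (real k ^ 3) * PP\<^sup>2"
    by (simp add: power_mult_distrib power2_eq_square) (simp add: power3_eq_cube mult_ac)
  also have "\<dots> \<le> 1156 * (real k ^ 3) * (8 * real k * NN)"
    using PP_sq by (intro mult_left_mono) auto
  also have "\<dots> = 9248 * real k ^ 5 * (NN / real k)"
    using kpos by (simp add: power_def field_simps)
  also have "\<dots> \<le> 10000 * real k ^ 6 * (NN / real k)"
  proof -
    have "real k ^ 5 \<le> real k ^ 6" using k1 by (intro power_increasing) auto
    moreover have "0 \<le> real k ^ 5" by simp
    ultimately have "9248 * real k ^ 5 \<le> 10000 * real k ^ 6" by (rule aux_9248)
    then show ?thesis using NN_nonneg kpos by (intro mult_right_mono) auto
  qed
  finally show ?thesis unfolding rayleigh_eq .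
qed

lemma main_locale:
  "\<exists>S. sub_bipartition V k S \<and>
        (\<forall>i<k.
          (1 - phibar V w (S (2*i)) (S (2*i+1)))\<^sup>2 / 2
            \<le> 1 - sqrt (1 - (1 - phibar V w (S (2*i)) (S (2*i+1)))\<^sup>2)
          \<and> 1 - sqrt (1 - (1 - phibar V w (S (2*i)) (S (2*i+1)))\<^sup>2)
            \<le> 10000 * real k ^ 6 * rayleigh_bar V w k f)"
proof -
  obtain \<sigma> where XXb: "XX \<sigma> \<le> 8 * sqrt (real k) / s * PP" using XX_bound by blast
  obtain Y where Y1: "\<forall>i<k. Y i \<subseteq> ckey \<sigma> ` V' \<and> 1/2 \<le> (\<Sum>K\<in>Y i. Wt \<sigma> K)"
    and Y2: "\<forall>i<k. \<forall>i'<k. i \<noteq> i' \<longrightarrow> Y i \<inter> Y i' = {}" using groups_exist[of \<sigma>] by blast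
  define g where "g i = gfun \<sigma> (Y i)" for i
  define Dv where "Dv i = (\<Sum>u\<in>V. deg V w u * (g i u)\<^sup>2)" for i
  have Dge: "1/2 \<le> Dv i" if "i < k" for i
    unfolding Dv_def g_def using D_eq[of "Y i" \<sigma>] Y1 that by simp
  define P where "P i A B \<longleftrightarrow> A \<subseteq> {u\<in>V. 0 < g i u} \<and> B \<subseteq> {u\<in>V. g i u < 0} \<and> A \<union> B \<noteq> {} \<and>
     vol V w (A \<union> B) - 2 * cut_weight w A B \<le> (Num \<sigma> (Y i) / (2 * Dv i)) * vol V w (A \<union> B)" for i A B
  have ex: "\<forall>i. \<exists>AB. i < k \<longrightarrow> P i (fst AB) (snd AB)"
  proof
    fix i
    show "\<exists>AB. i < k \<longrightarrow> P i (fst AB) (snd AB)"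
    proof (cases "i < k")
      case True
      have "0 < Dv i" using Dge[OF True] by simp
      then obtain A B where "A \<subseteq> {u\<in>V. 0 < g i u}" "B \<subseteq> {u\<in>V. g i u < 0}" "A \<union> B \<noteq> {}"
        "vol V w (A \<union> B) - 2 * cut_weight w A B
          \<le> ((\<Sum>u\<in>V. \<Sum>v\<in>V. w u v * (\<bar>g i u + g i v\<bar> * (\<bar>g i u\<bar> + \<bar>g i v\<bar>))) / (2 * Dv i)) * vol V w (A \<union> B)"
        using rounding[OF wg, of "g i"] unfolding Dv_def by blast
      then have "P i A B" unfolding P_def Num_def g_def by simp
      then show ?thesis by (intro exI[of _ "(A, B)"]) simp
    qed simp
  qed
  then obtain AB where AB: "\<forall>i<k. P i (fst (AB i)) (snd (AB i))" using choice[OF ex] by blast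
  define S where "S n = (if even n then fst (AB (n div 2)) else snd (AB (n div 2)))" for n
  have S0: "S (2*i) = fst (AB i)" and S1: "S (2*i+1) = snd (AB i)" for i unfolding S_def by auto
  have Ssub: "S n \<subseteq> {u\<in>V. g (n div 2) u \<noteq> 0}" if "n < 2*k" for n
  proof -
    have "n div 2 < k" using that by simp
    then have "P (n div 2) (fst (AB (n div 2))) (snd (AB (n div 2)))" using AB by blast
    then show ?thesis unfolding S_def P_def by auto
  qed
  have sb: "sub_bipartition V k S"
    unfolding sub_bipartition_def
  proof (intro conjI allI impI)
    fix n assume "n < 2*k" then show "S n \<subseteq> V" using Ssub by blast
  next
    fix n n' assume n: "n < 2*k" and n': "n' < 2*k" and nn: "n \<noteq> n'"
    show "S n \<inter> S n' = {}"
    proof (cases "n div 2 = n' div 2")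
      case False
      have "Y (n div 2) \<inter> Y (n' div 2) = {}" using Y2 False n n' by auto
      then show ?thesis using Ssub[OF n] Ssub[OF n'] gfun_supp unfolding g_def by blast
    next
      case True
      define i where "i = n div 2"
      have ik: "i < k" unfolding i_def using n by simp
      have Pi: "P i (fst (AB i)) (snd (AB i))" using AB ik by blast
      have "even n \<noteq> even n'" using True nn by (metis div_mult_mod_eq mod2_eq_if)
      then have "{S n, S n'} = {fst (AB i), snd (AB i)}" unfolding S_def i_def using True by auto
      moreover have "fst (AB i) \<inter> snd (AB i) = {}" using Pi unfolding P_def by force
      ultimately show ?thesis by (metis Int_commute doubleton_eq_iff)
    qed
  next
    fix i assume "i < k"
    then show "S (2*i) \<union> S (2*i+1) \<noteq> {}" using AB unfolding S0 S1 P_def by blast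
  qed
  have bounds: "(1 - phibar V w (S (2*i)) (S (2*i+1)))\<^sup>2 / 2
            \<le> 1 - sqrt (1 - (1 - phibar V w (S (2*i)) (S (2*i+1)))\<^sup>2)
          \<and> 1 - sqrt (1 - (1 - phibar V w (S (2*i)) (S (2*i+1)))\<^sup>2)
            \<le> 10000 * real k ^ 6 * rayleigh_bar V w k f" if ik: "i < k" for i
  proof -
    define A where "A = fst (AB i)"
    define B where "B = snd (AB i)"
    have Pi: "P i A B" using AB ik unfolding A_def B_def by blast
    have Asub: "A \<subseteq> {u\<in>V. 0 < g i u}" and Bsub: "B \<subseteq> {u\<in>V. g i u < 0}" and ne: "A \<union> B \<noteq> {}"
      using Pi unfolding P_def by auto
    have AV: "A \<subseteq> V" and BV: "B \<subseteq> V" using Asub Bsub by auto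
    have dis: "A \<inter> B = {}" using Asub Bsub by force
    have ineq: "vol V w (A \<union> B) - 2 * cut_weight w A B \<le> (Num \<sigma> (Y i) / (2 * Dv i)) * vol V w (A \<union> B)"
      using Pi unfolding P_def by blast
    define b where "b = 1 - phibar V w A B"
    have b0: "0 \<le> b" and b1: "b \<le> 1" and br: "b \<le> Num \<sigma> (Y i) / (2 * Dv i)"
      unfolding b_def using phibar_facts[OF wg AV BV dis ne] ineq by auto
    have "b\<^sup>2 \<le> 10000 * real k ^ 6 * rayleigh_bar V w k f"
      by (rule beta_sq_bound[OF Dge[OF ik] b0 br XXb])
    moreover note beta_ineqs[OF b0 b1]
    ultimately show ?thesis unfolding S0 S1 A_def[symmetric] B_def[symmetric] b_def[symmetric] by linarith
  qed
  show ?thesis using sb bounds by blast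
qed

end

theorem theorem6p1:
  shows "\<exists>C::real. C > 0 \<and>
    (\<forall>(V::nat set) (w::nat \<Rightarrow> nat \<Rightarrow> real) (k::nat) (f::nat \<Rightarrow> nat \<Rightarrow> real).
      weighted_graph V w \<longrightarrow>
      (\<forall>i<k. \<forall>j<k. ip_mu V w (f i) (f j) = (if i = j then 1 else 0)) \<longrightarrow>
      (\<exists>S. sub_bipartition V k S \<and>
        (\<forall>i<k.
          (1 - phibar V w (S (2*i)) (S (2*i+1)))\<^sup>2 / 2
            \<le> 1 - sqrt (1 - (1 - phibar V w (S (2*i)) (S (2*i+1)))\<^sup>2)
          \<and> 1 - sqrt (1 - (1 - phibar V w (S (2*i)) (S (2*i+1)))\<^sup>2)
            \<le> C * real k ^ 6 * rayleigh_bar V w k f)))"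
proof (intro exI[of _ 10000] conjI allI impI)
  show "(0::real) < 10000" by simp
next
  fix V :: "nat set" and w :: "nat \<Rightarrow> nat \<Rightarrow> real" and k :: nat and f :: "nat \<Rightarrow> nat \<Rightarrow> real"
  assume wg: "weighted_graph V w" and orth: "\<forall>i<k. \<forall>j<k. ip_mu V w (f i) (f j) = (if i = j then 1 else 0)"
  show "\<exists>S. sub_bipartition V k S \<and>
        (\<forall>i<k.
          (1 - phibar V w (S (2*i)) (S (2*i+1)))\<^sup>2 / 2
            \<le> 1 - sqrt (1 - (1 - phibar V w (S (2*i)) (S (2*i+1)))\<^sup>2)
          \<and> 1 - sqrt (1 - (1 - phibar V w (S (2*i)) (S (2*i+1)))\<^sup>2)
            \<le> 10000 * real k ^ 6 * rayleigh_bar V w k f)"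
  proof (cases "k = 0")
    case True
    then show ?thesis unfolding sub_bipartition_def by simp
  next
    case False
    then interpret thm_setup V w k f using wg orth by unfold_locales auto
    show ?thesis by (rule main_locale)
  qed
qed


end
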